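(* Let $X^{(\kappa)}_N$ be a twisted affine type with associated simply laced diagram $X_N$ and diagram automorphism $\sigma$. Let $\mathcal{J}^\sigma$ be the ideal of $\mathcal{T}(X_N)$ (with spectral parameter domain $\mathbb{C}_\hbar$) generated by $\hat T^{(a)}_m(u)-\hat T^{(\sigma(a))}_m(u+\Omega)$ for all $a\in I$, $m\in\mathbb{N}$, $u\in\mathbb{C}_\hbar$. Then there is a ring isomorphism $\mathcal{T}(X_N)/\mathcal{J}^\sigma\to\mathcal{T}(X^{(\kappa)}_N)$ sending the class of $\hat T^{(a)}_m(u)$ to $T^{(a)}_m(u)$ for $a\in I_\sigma$, $m\in\mathbb{N}$, $u\in\mathbb{C}_{\kappa_a\hbar}$ (the class of $\hat T^{(a)}_m(u)$ for $a\in I_\sigma$ depends only on $u$ modulo $(2\pi\sqrt{-1}/\kappa_a\hbar)\mathbb{Z}$).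
   Context: Fix $\hbar\in\mathbb{C}\setminus2\pi\sqrt{-1}\mathbb{Q}$; $\mathbb{C}_c:=\mathbb{C}/(2\pi\sqrt{-1}/c)\mathbb{Z}$. The pairs: $A^{(2)}_{2r-1}$ ($r\ge2$): $X_N=A_{2r-1}$ (chain), $\sigma(a)=2r-a$, $\kappa=2$; $A^{(2)}_{2r}$ ($r\ge1$): $X_N=A_{2r}$, $\sigma(a)=2r+1-a$, $\kappa=2$; $D^{(2)}_{r+1}$ ($r\ge3$): $X_N=D_{r+1}$ (chain $1-\cdots-(r-1)$ with $r,r+1$ joined to $r-1$), $\sigma$ swaps $r,r+1$, $\kappa=2$; $E^{(2)}_6$: $X_N=E_6$ (chain $1-2-3-5-6$, $4$ joined to $3$), $\sigma$ swaps $1\leftrightarrow6$, $2\leftrightarrow5$, $\kappa=2$; $D^{(3)}_4$: $X_N=D_4$ ($1,3,4$ joined to $2$), $\sigma:1\mapsto3\mapsto4\mapsto1$, $\kappa=3$. $I_\sigma=\{1,\dots,r\}$ in the first three cases, $\{1,2,3,4\}$ for $E^{(2)}_6$, $\{1,2\}$ for $D^{(3)}_4$. $\kappa_a=\kappa$ if $\sigma(a)=a$, else $1$. $\Omega=2\pi\sqrt{-1}/(\kappa\hbar)$. $\mathcal{T}(X_N)$: commutative ring with generators $\hat T^{(a)}_m(u)^{\pm1}$ ($a\in I$, $m\in\mathbb{N}$, $u\in\mathbb{C}_\hbar$) and relations $\hat T^{(a)}_m(u-1)\hat T^{(a)}_m(u+1)=\hat T^{(a)}_{m-1}(u)\hat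 T^{(a)}_{m+1}(u)+\prod_{b:C_{ab}=-1}\hat T^{(b)}_m(u)$, $\hat T^{(a)}_0=1$, $C$ the Cartan matrix of $X_N$. $\mathcal{T}(X^{(\kappa)}_N)$: commutative ring with generators $T^{(a)}_m(u)^{\pm1}$ ($a\in I_\sigma$, $m\in\mathbb{N}$, $u\in\mathbb{C}_{\kappa_a\hbar}$) and relations $T^{(a)}_m(u-1)T^{(a)}_m(u+1)=T^{(a)}_{m-1}(u)T^{(a)}_{m+1}(u)+M^{(a)}_m(u)$, with $T^{(0)}_m=T^{(a)}_0=1$, where: $A^{(2)}_{2r-1}$: $M^{(a)}_m=T^{(a-1)}_m(u)T^{(a+1)}_m(u)$ ($a\le r-1$), $M^{(r)}_m=T^{(r-1)}_m(u)T^{(r-1)}_m(u+\Omega)$; $A^{(2)}_{2r}$: $M^{(a)}_m=T^{(a-1)}_m(u)T^{(a+1)}_m(u)$ ($a\le r-1$), $M^{(r)}_m=T^{(r-1)}_m(u)T^{(r)}_m(u+\Omega)$; $D^{(2)}_{r+1}$: $M^{(a)}_m=T^{(a-1)}_m(u)T^{(a+1)}_m(u)$ ($a\le r-2$), $M^{(r-1)}_m=T^{(r-2)}_m(u)T^{(r)}_m(u)T^{(r)}_m(u+\Omega)$, $M^{(r)}_m=T^{(r-1)}_m(u)$; $E^{(2)}_6$: $M^{(1)}_m=T^{(2)}_m(u)$, $M^{(2)}_m=T^{(1)}_m(u)T^{(3)}_m(u)$, $M^{(3)}_m=T^{(2)}_m(u)T^{(2)}_m(u+\Omega)T^{(4)}_m(u)$,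 $M^{(4)}_m=T^{(3)}_m(u)$; $D^{(3)}_4$: $M^{(1)}_m=T^{(2)}_m(u)$, $M^{(2)}_m=T^{(1)}_m(u)T^{(1)}_m(u-\Omega)T^{(1)}_m(u+\Omega)$. *)

theory Defs
  imports Complex_Main "HOL-Library.Poly_Mapping" "HOL-Algebra.QuotRing"
begin

definition cyl :: "complex \<Rightarrow> complex \<Rightarrow> complex set" where
  "cyl c u = {u + of_int k * (2 * of_real pi * \<i> / c) | k. True}"

type_synonym 'v lpoly = "('v \<Rightarrow>\<^sub>0 int) \<Rightarrow>\<^sub>0 int"

text \<open>Laurent polynomial ring over Z in the variables from V (free commutative
  ring on invertible generators indexed by V).\<close>
definition laurent :: "'v set \<Rightarrow> 'v lpoly ring" where
  "laurent V = \<lparr>carrier = {p :: 'v lpoly. \<forall>mon \<in> Poly_Mapping.keys p. Poly_Mapping.keys mon \<subseteq> V},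
                mult = (*), one = 1, zero = 0, add = (+)\<rparr>"

definition var :: "'v \<Rightarrow> 'v lpoly" where
  "var v = Poly_Mapping.single (Poly_Mapping.single v 1) 1"

definition presented :: "'v set \<Rightarrow> 'v lpoly set \<Rightarrow> ('v lpoly set) ring" where
  "presented V rels = laurent V Quot genideal (laurent V) rels"

definition cls :: "'v set \<Rightarrow> 'v lpoly set \<Rightarrow> 'v lpoly \<Rightarrow> 'v lpoly set" where
  "cls V rels p = genideal (laurent V) rels +>\<^bsub>laurent V\<^esub> p"

datatype ttype = A2odd nat | A2even nat | D2 nat | E62 | D43

definition valid_type :: "ttype \<Rightarrow> bool" where
  "valid_type t = (case t of A2odd r \<Rightarrow> r \<ge> 2 | A2even r \<Rightarrow> r \<ge> 1 | D2 r \<Rightarrow> r \<ge> 3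
                    | E62 \<Rightarrow> True | D43 \<Rightarrow> True)"

text \<open>Node set I of the simply laced diagram X_N.\<close>
definition nodes :: "ttype \<Rightarrow> nat set" where
  "nodes t = (case t of A2odd r \<Rightarrow> {1..2*r-1} | A2even r \<Rightarrow> {1..2*r} | D2 r \<Rightarrow> {1..r+1}
                | E62 \<Rightarrow> {1..6} | D43 \<Rightarrow> {1..4})"

definition adj :: "ttype \<Rightarrow> nat \<Rightarrow> nat \<Rightarrow> bool" where
  "adj t a b = (a \<in> nodes t \<and> b \<in> nodes t \<and>
     (case t of
        A2odd r \<Rightarrow> a = b + 1 \<or> b = a + 1
      | A2even r \<Rightarrow> a = b + 1 \<or> b = a + 1
      | D2 r \<Rightarrow> ((a = b + 1 \<or> b = a + 1) \<and> a \<le> r \<and> b \<le> r)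
                \<or> {a, b} = {r - 1, r + 1}
      | E62 \<Rightarrow> {a, b} \<in> {{1,2},{2,3},{3,5},{5,6},{3,4}}
      | D43 \<Rightarrow> {a, b} \<in> {{1,2},{2,3},{2,4}}))"

definition sigma :: "ttype \<Rightarrow> nat \<Rightarrow> nat" where
  "sigma t a = (case t of
        A2odd r \<Rightarrow> 2*r - a
      | A2even r \<Rightarrow> 2*r + 1 - a
      | D2 r \<Rightarrow> (if a = r then r + 1 else if a = r + 1 then r else a)
      | E62 \<Rightarrow> (if a = 1 then 6 else if a = 6 then 1 else if a = 2 then 5
                else if a = 5 then 2 else a)
      | D43 \<Rightarrow> (if a = 1 then 3 else if a = 3 then 4 else if a = 4 then 1 else a))"

definition kappa :: "ttype \<Rightarrow> nat" where
  "kappa t = (case t of D43 \<Rightarrow> 3 | _ \<Rightarrow> 2)"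

definition Isig :: "ttype \<Rightarrow> nat set" where
  "Isig t = (case t of A2odd r \<Rightarrow> {1..r} | A2even r \<Rightarrow> {1..r} | D2 r \<Rightarrow> {1..r}
               | E62 \<Rightarrow> {1..4} | D43 \<Rightarrow> {1..2})"

definition kappa_a :: "ttype \<Rightarrow> nat \<Rightarrow> nat" where
  "kappa_a t a = (if sigma t a = a then kappa t else 1)"

definition Omega :: "ttype \<Rightarrow> complex \<Rightarrow> complex" where
  "Omega t h = 2 * of_real pi * \<i> / (of_nat (kappa t) * h)"

type_synonym gen = "nat \<times> nat \<times> complex set"

definition gensX :: "ttype \<Rightarrow> complex \<Rightarrow> gen set" where
  "gensX t h = {(a, m, cyl h u) | a m u. a \<in> nodes t \<and> m \<ge> 1}"

definition TX :: "complex \<Rightarrow> nat \<Rightarrow> nat \<Rightarrow> complex \<Rightarrow> gen lpoly" where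
  "TX h a m u = (if m = 0 then 1 else var (a, m, cyl h u))"

definition relsX :: "ttype \<Rightarrow> complex \<Rightarrow> gen lpoly set" where
  "relsX t h = {TX h a m (u - 1) * TX h a m (u + 1) - TX h a (m - 1) u * TX h a (m + 1) u
                 - (\<Prod>b\<in>{b. adj t a b}. TX h b m u) | a m u. a \<in> nodes t \<and> m \<ge> 1}"

definition ringX :: "ttype \<Rightarrow> complex \<Rightarrow> gen lpoly set ring" where
  "ringX t h = presented (gensX t h) (relsX t h)"

definition clsX :: "ttype \<Rightarrow> complex \<Rightarrow> gen lpoly \<Rightarrow> gen lpoly set" where
  "clsX t h = cls (gensX t h) (relsX t h)"

definition Jsig :: "ttype \<Rightarrow> complex \<Rightarrow> gen lpoly set set" where
  "Jsig t h = genideal (ringX t h)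
     {clsX t h (TX h a m u) \<ominus>\<^bsub>ringX t h\<^esub> clsX t h (TX h (sigma t a) m (u + Omega t h))
       | a m u. a \<in> nodes t \<and> m \<ge> 1}"

definition quotX :: "ttype \<Rightarrow> complex \<Rightarrow> gen lpoly set set ring" where
  "quotX t h = ringX t h Quot Jsig t h"

definition gensT :: "ttype \<Rightarrow> complex \<Rightarrow> gen set" where
  "gensT t h = {(a, m, cyl (of_nat (kappa_a t a) * h) u) | a m u. a \<in> Isig t \<and> m \<ge> 1}"

definition TT :: "ttype \<Rightarrow> complex \<Rightarrow> nat \<Rightarrow> nat \<Rightarrow> complex \<Rightarrow> gen lpoly" where
  "TT t h a m u = (if m = 0 \<or> a = 0 then 1
                   else var (a, m, cyl (of_nat (kappa_a t a) * h) u))"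

definition Mt :: "ttype \<Rightarrow> complex \<Rightarrow> nat \<Rightarrow> nat \<Rightarrow> complex \<Rightarrow> gen lpoly" where
  "Mt t h a m u = (let T = (\<lambda>b v. TT t h b m v); \<Omega> = Omega t h in
     (case t of
        A2odd r \<Rightarrow> (if a \<le> r - 1 then T (a-1) u * T (a+1) u
                    else T (r-1) u * T (r-1) (u + \<Omega>))
      | A2even r \<Rightarrow> (if a \<le> r - 1 then T (a-1) u * T (a+1) u
                    else T (r-1) u * T r (u + \<Omega>))
      | D2 r \<Rightarrow> (if a \<le> r - 2 then T (a-1) u * T (a+1) u
                 else if a = r - 1 then T (r-2) u * T r u * T r (u + \<Omega>)
                 else T (r-1) u)
      | E62 \<Rightarrow> (if a = 1 then T 2 u
                else if a = 2 then T 1 u * T 3 u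
                else if a = 3 then T 2 u * T 2 (u + \<Omega>) * T 4 u
                else T 3 u)
      | D43 \<Rightarrow> (if a = 1 then T 2 u
                else T 1 u * T 1 (u - \<Omega>) * T 1 (u + \<Omega>))))"

definition relsT :: "ttype \<Rightarrow> complex \<Rightarrow> gen lpoly set" where
  "relsT t h = {TT t h a m (u - 1) * TT t h a m (u + 1) - TT t h a (m - 1) u * TT t h a (m + 1) u
                 - Mt t h a m u | a m u. a \<in> Isig t \<and> m \<ge> 1}"

definition ringT :: "ttype \<Rightarrow> complex \<Rightarrow> gen lpoly set ring" where
  "ringT t h = presented (gensT t h) (relsT t h)"

definition clsT :: "ttype \<Rightarrow> complex \<Rightarrow> gen lpoly \<Rightarrow> gen lpoly set" where
  "clsT t h = cls (gensT t h) (relsT t h)"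

definition clsQ :: "ttype \<Rightarrow> complex \<Rightarrow> gen lpoly \<Rightarrow> gen lpoly set set" where
  "clsQ t h p = Jsig t h +>\<^bsub>ringX t h\<^esub> clsX t h p"

end

theory Submission
  imports Defs
begin


section \<open>Laurent rings\<close>

definition LC :: "'v set \<Rightarrow> 'v lpoly set" where
  "LC V = {p. \<forall>mn \<in> Poly_Mapping.keys p. Poly_Mapping.keys mn \<subseteq> V}"

lemma laurent_carrier [simp]: "carrier (laurent V) = LC V"
  and laurent_mult [simp]: "mult (laurent V) = (*)"
  and laurent_add [simp]: "add (laurent V) = (+)"
  and laurent_one [simp]: "one (laurent V) = 1"
  and laurent_zero [simp]: "zero (laurent V) = 0"
  by (simp_all add: laurent_def LC_def)

lemma LC_add: "p \<in> LC V \<Longrightarrow> q \<in> LC V \<Longrightarrow> p + q \<in> LC V"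
  using Poly_Mapping.keys_add[of p q] unfolding LC_def by fastforce

lemma LC_minus: "p \<in> LC V \<Longrightarrow> - p \<in> LC V"
  unfolding LC_def by (simp add: Poly_Mapping.keys_minus)

lemma LC_diff: "p \<in> LC V \<Longrightarrow> q \<in> LC V \<Longrightarrow> p - q \<in> LC V"
  unfolding diff_conv_add_uminus by (intro LC_add LC_minus)

lemma LC_mult: "p \<in> LC V \<Longrightarrow> q \<in> LC V \<Longrightarrow> p * q \<in> LC V"
proof -
  assume p: "p \<in> LC V" and q: "q \<in> LC V"
  show ?thesis
  proof (unfold LC_def, intro CollectI ballI)
    fix mn assume "mn \<in> Poly_Mapping.keys (p * q)"
    then obtain a b where "mn = a + b" "a \<in> Poly_Mapping.keys p" "b \<in> Poly_Mapping.keys q"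
      using Poly_Mapping.keys_mult by blast
    then show "Poly_Mapping.keys mn \<subseteq> V"
      using p q Poly_Mapping.keys_add[of a b] unfolding LC_def by blast
  qed
qed

lemma LC_one: "1 \<in> LC V" unfolding LC_def by simp
lemma LC_zero: "0 \<in> LC V" unfolding LC_def by simp

lemma LC_single: "Poly_Mapping.keys mn \<subseteq> V \<Longrightarrow> Poly_Mapping.single mn c \<in> LC V"
  unfolding LC_def by simp

lemma LC_var: "v \<in> V \<Longrightarrow> var v \<in> LC V"
  unfolding var_def by (rule LC_single) simp

lemma LC_prod: "finite A \<Longrightarrow> (\<And>x. x \<in> A \<Longrightarrow> f x \<in> LC V) \<Longrightarrow> prod f A \<in> LC V"
  by (induction A rule: finite_induct) (auto intro: LC_one LC_mult)

lemma LC_prod': "(\<And>x. x \<in> A \<Longrightarrow> f x \<in> LC V) \<Longrightarrow> prod f A \<in> LC V"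
  by (cases "finite A") (auto intro: LC_prod LC_one)

lemma laurent_cring: "cring (laurent V)"
proof (rule cringI)
  show "abelian_group (laurent V)"
  proof (rule abelian_groupI)
    fix x assume "x \<in> carrier (laurent V)"
    then show "\<exists>y\<in>carrier (laurent V). y \<oplus>\<^bsub>laurent V\<^esub> x = \<zero>\<^bsub>laurent V\<^esub>"
      by (intro bexI[of _ "-x"]) (auto intro: LC_minus)
  qed (auto intro: LC_add LC_zero simp: add.assoc add.commute)
  show "comm_monoid (laurent V)"
    by (rule comm_monoidI) (auto intro: LC_mult LC_one simp: mult.assoc mult.commute)
qed (simp add: distrib_right)

interpretation L: cring "laurent V" for V by (rule laurent_cring)

lemma laurent_a_inv [simp]: "p \<in> LC V \<Longrightarrow> \<ominus>\<^bsub>laurent V\<^esub> p = - p"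
  by (rule L.add.inv_equality) (auto intro: LC_minus)

lemma laurent_minus [simp]: "p \<in> LC V \<Longrightarrow> q \<in> LC V \<Longrightarrow> p \<ominus>\<^bsub>laurent V\<^esub> q = p - q"
  unfolding a_minus_def by simp

section \<open>Substitution of variables\<close>

definition mmap :: "('v \<Rightarrow> 'w) \<Rightarrow> ('v \<Rightarrow>\<^sub>0 int) \<Rightarrow> ('w \<Rightarrow>\<^sub>0 int)" where
  "mmap g = frag_extend (frag_of \<circ> g)"

definition pmap :: "('v \<Rightarrow> 'w) \<Rightarrow> 'v lpoly \<Rightarrow> 'w lpoly" where
  "pmap g = frag_extend (frag_of \<circ> mmap g)"

lemma mmap_add: "mmap g (a + b) = mmap g a + mmap g b"
  by (simp add: mmap_def frag_extend_add)

lemma mmap_0 [simp]: "mmap g 0 = 0"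
  by (simp add: mmap_def)

lemma pmap_add: "pmap g (a + b) = pmap g a + pmap g b"
  by (simp add: pmap_def frag_extend_add)

lemma pmap_diff: "pmap g (a - b) = pmap g a - pmap g b"
  by (simp add: pmap_def frag_extend_diff)

lemma pmap_0 [simp]: "pmap g 0 = 0"
  by (simp add: pmap_def)

lemma pmap_single1: "pmap g (Poly_Mapping.single mn 1) = Poly_Mapping.single (mmap g mn) 1"
  by (simp add: pmap_def)

lemma pmap_one [simp]: "pmap g 1 = 1"
  using pmap_single1[of g 0] by simp

lemma pmap_var [simp]: "pmap g (var v) = var (g v)"
  by (simp add: var_def pmap_single1 mmap_def)

lemma pmap_mult: "pmap g (p * q) = pmap g p * pmap g q"
proof -
  have single: "pmap g (frag_of a * q) = pmap g (frag_of a) * pmap g q" for a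
  using subset_UNIV[of "Poly_Mapping.keys q"]
  proof (induction q rule: frag_induction)
    case zero then show ?case by simp
  next
    case (one x) then show ?case
      by (simp add: mult_single pmap_single1 mmap_add)
  next
    case (diff a b) then show ?case
      by (simp add: right_diff_distrib pmap_diff)
  qed
  show ?thesis
  using subset_UNIV[of "Poly_Mapping.keys p"]
  proof (induction p rule: frag_induction)
    case zero then show ?case by simp
  next
    case (one x) then show ?case using single by simp
  next
    case (diff a b) then show ?case
      by (simp add: left_diff_distrib pmap_diff)
  qed
qed

lemma pmap_prod: "pmap g (prod f A) = (\<Prod>x\<in>A. pmap g (f x))"
  by (induction A rule: infinite_finite_induct) (auto simp: pmap_mult)

lemma mmap_comp: "mmap g (mmap f m) = mmap (g \<circ> f) m"
  unfolding mmap_def using frag_extend_compose[of "frag_of \<circ> g" f m]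
  by (simp add: comp_assoc)

lemma pmap_comp: "pmap g (pmap f p) = pmap (g \<circ> f) p"
proof -
  have "pmap g (pmap f p) = frag_extend ((frag_of \<circ> mmap g) \<circ> mmap f) p"
    unfolding pmap_def using frag_extend_compose[of "frag_of \<circ> mmap g" "mmap f" p]
    by (simp add: comp_assoc)
  also have "(frag_of \<circ> mmap g) \<circ> mmap f = frag_of \<circ> mmap (g \<circ> f)"
    by (auto simp: mmap_comp)
  finally show ?thesis by (simp add: pmap_def comp_def)
qed

lemma mmap_cong: "Poly_Mapping.keys m \<subseteq> V \<Longrightarrow> (\<And>v. v \<in> V \<Longrightarrow> g v = g' v) \<Longrightarrow> mmap g m = mmap g' m"
  unfolding mmap_def by (rule frag_extend_eq) auto

lemma pmap_cong: assumes "p \<in> LC V" "\<And>v. v \<in> V \<Longrightarrow> g v = g' v" shows "pmap g p = pmap g' p"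
proof (unfold pmap_def, rule frag_extend_eq)
  fix f assume "f \<in> Poly_Mapping.keys p"
  then have "Poly_Mapping.keys f \<subseteq> V" using assms(1) by (auto simp: LC_def)
  then show "(frag_of \<circ> mmap g) f = (frag_of \<circ> mmap g') f" using mmap_cong[of f V g g'] assms(2) by simp
qed

lemma mmap_id: "mmap id m = m"
  unfolding mmap_def using frag_expansion[of m] by simp

lemma pmap_id: "pmap id p = p"
  unfolding pmap_def using frag_expansion[of p] by (simp add: mmap_id comp_def)

lemma keys_mmap: "Poly_Mapping.keys (mmap g m) \<subseteq> g ` Poly_Mapping.keys m"
  unfolding mmap_def using keys_frag_extend[of "frag_of \<circ> g" m] by (auto simp: keys_frag_of)

lemma pmap_LC: assumes "p \<in> LC V" "g ` V \<subseteq> W" shows "pmap g p \<in> LC W"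
proof (unfold LC_def pmap_def, intro CollectI ballI)
  fix mn assume mon: "mn \<in> Poly_Mapping.keys (frag_extend (frag_of \<circ> mmap g) p)"
  have p: "\<forall>mn\<in>Poly_Mapping.keys p. Poly_Mapping.keys mn \<subseteq> V" using assms(1) by (simp add: LC_def)
  obtain m where m: "m \<in> Poly_Mapping.keys p" "mn = mmap g m"
    using mon keys_frag_extend[of "frag_of \<circ> mmap g" p] by (auto simp: keys_frag_of)
  then show "Poly_Mapping.keys mn \<subseteq> W" using keys_mmap[of g m] p assms(2) by blast
qed

lemma pmap_hom: "g ` V \<subseteq> W \<Longrightarrow> pmap g \<in> ring_hom (laurent V) (laurent W)"
  by (rule ring_hom_memI) (auto simp: pmap_LC pmap_mult pmap_add)

lemma hom_ext:
  assumes S: "cring S" and H: "H \<in> ring_hom (laurent V) S" and H': "H' \<in> ring_hom (laurent V) S"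
    and eq: "\<And>v. v \<in> V \<Longrightarrow> H (var v) = H' (var v)"
    and p: "p \<in> LC V"
  shows "H p = H' p"
proof -
  interpret S: cring S by fact
  interpret h1: ring_hom_cring "laurent V" S H by (intro ring_hom_cring.intro ring_hom_cring_axioms.intro laurent_cring S H)
  interpret h2: ring_hom_cring "laurent V" S H' by (intro ring_hom_cring.intro ring_hom_cring_axioms.intro laurent_cring S H')
  have mono: "Poly_Mapping.keys m \<subseteq> V \<and> H (frag_of m) = H' (frag_of m)" if "Poly_Mapping.keys m \<subseteq> V" for m
    using that
  proof (induction m rule: frag_induction)
    case zero then show ?case using h1.hom_one h2.hom_one by simp
  next
    case (one x) then show ?case using eq[of x] by (simp add: var_def keys_frag_of)
  next
    case (diff a b)
    have ka: "Poly_Mapping.keys a \<subseteq> V" and kb: "Poly_Mapping.keys b \<subseteq> V" using diff by auto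
    have kab: "Poly_Mapping.keys (a - b) \<subseteq> V"
      using ka kb Poly_Mapping.keys_add[of a "-b"] by (auto simp: Poly_Mapping.keys_minus)
    have kmb: "Poly_Mapping.keys (-b) \<subseteq> V" using kb by (simp add: Poly_Mapping.keys_minus)
    have c: "frag_of m \<in> LC V" if "Poly_Mapping.keys m \<subseteq> V" for m using that by (rule LC_single)
    have inv: "frag_of b * frag_of (-b) = 1" by (simp add: mult_single)
    have split: "frag_of (a - b) = frag_of a * frag_of (-b)" by (simp add: mult_single)
    have i1: "H (frag_of b) \<otimes>\<^bsub>S\<^esub> H (frag_of (-b)) = \<one>\<^bsub>S\<^esub>"
      using h1.hom_mult[of "frag_of b" "frag_of (-b)"] c[OF kb] c[OF kmb] inv h1.hom_one by simp
    have i2: "H' (frag_of b) \<otimes>\<^bsub>S\<^esub> H' (frag_of (-b)) = \<one>\<^bsub>S\<^esub>"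
      using h2.hom_mult[of "frag_of b" "frag_of (-b)"] c[OF kb] c[OF kmb] inv h2.hom_one by simp
    have Hb: "H (frag_of b) = H' (frag_of b)" using diff by simp
    have cl: "H (frag_of (-b)) \<in> carrier S" "H' (frag_of (-b)) \<in> carrier S" "H (frag_of b) \<in> carrier S"
      using c[OF kmb] c[OF kb] by auto
    have "H (frag_of (-b)) = H (frag_of (-b)) \<otimes>\<^bsub>S\<^esub> (H' (frag_of b) \<otimes>\<^bsub>S\<^esub> H' (frag_of (-b)))"
      using i2 cl by simp
    also have "\<dots> = (H (frag_of b) \<otimes>\<^bsub>S\<^esub> H (frag_of (-b))) \<otimes>\<^bsub>S\<^esub> H' (frag_of (-b))"
      using cl Hb by (simp add: S.m_ac)
    also have "\<dots> = H' (frag_of (-b))" using i1 cl by simp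
    finally have Hmb: "H (frag_of (-b)) = H' (frag_of (-b))" .
    show ?case using kab split h1.hom_mult[of "frag_of a" "frag_of (-b)"] h2.hom_mult[of "frag_of a" "frag_of (-b)"]
        c[OF ka] c[OF kmb] Hmb diff by simp
  qed
  have "Poly_Mapping.keys p \<subseteq> {m. Poly_Mapping.keys m \<subseteq> V}" using p by (auto simp: LC_def)
  then have "p \<in> LC V \<and> H p = H' p"
  proof (induction p rule: frag_induction[where S="{m. Poly_Mapping.keys m \<subseteq> V}"])
    case zero
    then show ?case using h1.hom_zero h2.hom_zero by (simp add: LC_zero)
  next
    case (one x)
    then show ?case using mono[of x] by (simp add: LC_single)
  next
    case (diff a b)
    have "H a = H (a - b) \<oplus>\<^bsub>S\<^esub> H b" "H' a = H' (a - b) \<oplus>\<^bsub>S\<^esub> H' b"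
      using h1.hom_add[of "a - b" b] h2.hom_add[of "a - b" b] diff LC_diff[of a V b] by auto
    then have "H (a - b) \<oplus>\<^bsub>S\<^esub> H b = H' (a - b) \<oplus>\<^bsub>S\<^esub> H b" using diff by simp
    moreover have "a - b \<in> LC V" using diff LC_diff by blast
    ultimately have "H (a - b) = H' (a - b)"
      using S.add.right_cancel[of "H b" "H (a - b)" "H' (a - b)"] diff h1.hom_closed h2.hom_closed by simp
    then show ?case using diff LC_diff by blast
  qed
  then show ?thesis by simp
qed

section \<open>Induced homomorphisms on quotients\<close>

lemma quot_carrier_obtain:
  assumes "Y \<in> carrier (R Quot I)" obtains x where "x \<in> carrier R" "Y = I +>\<^bsub>R\<^esub> x"
  using assms by (auto simp: FactRing_def A_RCOSETS_def')

lemma quot_carrierI: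
  assumes "x \<in> carrier R" shows "I +>\<^bsub>R\<^esub> x \<in> carrier (R Quot I)"
  using assms by (auto simp: FactRing_def A_RCOSETS_def')

lemma quot_hom_val:
  assumes R: "cring R" and S: "cring S" and I: "ideal I R" and h: "h \<in> ring_hom R S"
    and ker: "\<And>i. i \<in> I \<Longrightarrow> h i = \<zero>\<^bsub>S\<^esub>" and x: "x \<in> carrier R"
  shows "the_elem (h ` (I +>\<^bsub>R\<^esub> x)) = h x"
proof -
  interpret R: cring R by fact
  interpret S: cring S by fact
  interpret I: ideal I R by fact
  interpret hh: ring_hom_cring R S h by (intro ring_hom_cring.intro ring_hom_cring_axioms.intro R S h)
  have "h ` (I +>\<^bsub>R\<^esub> x) = {h x}"
  proof -
    have "h (i \<oplus>\<^bsub>R\<^esub> x) = h x" if "i \<in> I" for i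
      using that ker x I.a_Hcarr by simp
    moreover have "x \<in> I +>\<^bsub>R\<^esub> x" using I.a_rcos_self x by (metis I.abelian_subgroup_axioms abelian_subgroup.a_rcos_self)
    ultimately show ?thesis by (auto simp: a_r_coset_def' image_iff)
  qed
  then show ?thesis by simp
qed

lemma quot_hom:
  assumes R: "cring R" and S: "cring S" and I: "ideal I R" and h: "h \<in> ring_hom R S"
    and ker: "\<And>i. i \<in> I \<Longrightarrow> h i = \<zero>\<^bsub>S\<^esub>"
  shows "(\<lambda>Y. the_elem (h ` Y)) \<in> ring_hom (R Quot I) S"
proof -
  interpret R: cring R by fact
  interpret S: cring S by fact
  interpret I: ideal I R by fact
  note val = quot_hom_val[OF R S I h ker]
  show ?thesis
  proof (rule ring_hom_memI)
    fix Y assume "Y \<in> carrier (R Quot I)"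
    then obtain x where "x \<in> carrier R" "Y = I +>\<^bsub>R\<^esub> x" by (rule quot_carrier_obtain)
    then show "the_elem (h ` Y) \<in> carrier S" using val h ring_hom_closed by metis
  next
    fix X Y assume "X \<in> carrier (R Quot I)" "Y \<in> carrier (R Quot I)"
    then obtain x y where xy: "x \<in> carrier R" "X = I +>\<^bsub>R\<^esub> x" "y \<in> carrier R" "Y = I +>\<^bsub>R\<^esub> y"
      by (metis quot_carrier_obtain)
    have "X \<otimes>\<^bsub>R Quot I\<^esub> Y = I +>\<^bsub>R\<^esub> (x \<otimes>\<^bsub>R\<^esub> y)"
      using xy by (simp add: FactRing_def I.rcoset_mult_add)
    then show "the_elem (h ` (X \<otimes>\<^bsub>R Quot I\<^esub> Y)) = the_elem (h ` X) \<otimes>\<^bsub>S\<^esub> the_elem (h ` Y)"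
      using xy val ring_hom_mult[OF h] by simp
    have "X \<oplus>\<^bsub>R Quot I\<^esub> Y = I +>\<^bsub>R\<^esub> (x \<oplus>\<^bsub>R\<^esub> y)"
      using xy by (simp add: FactRing_def I.a_rcos_sum)
    then show "the_elem (h ` (X \<oplus>\<^bsub>R Quot I\<^esub> Y)) = the_elem (h ` X) \<oplus>\<^bsub>S\<^esub> the_elem (h ` Y)"
      using xy val ring_hom_add[OF h] by simp
  next
    show "the_elem (h ` \<one>\<^bsub>R Quot I\<^esub>) = \<one>\<^bsub>S\<^esub>"
      using val[of "\<one>\<^bsub>R\<^esub>"] ring_hom_one[OF h] by (simp add: FactRing_def)
  qed
qed

lemma coset_eq_ideal_mem:
  assumes "ring R" "ideal I R" "x \<in> carrier R" "I +>\<^bsub>R\<^esub> x = I" shows "x \<in> I"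
proof -
  interpret I: ideal I R by fact
  have "x \<in> I +>\<^bsub>R\<^esub> x" by (metis I.abelian_subgroup_axioms abelian_subgroup.a_rcos_self assms(3))
  then show ?thesis using assms(4) by simp
qed


definition rho :: "ttype \<Rightarrow> nat \<Rightarrow> nat" where
  "rho t a = (case t of A2odd r \<Rightarrow> (if a \<le> r then a else 2*r - a)
     | A2even r \<Rightarrow> (if a \<le> r then a else 2*r + 1 - a)
     | D2 r \<Rightarrow> (if a = r + 1 then r else a)
     | E62 \<Rightarrow> (if a = 5 then 2 else if a = 6 then 1 else a)
     | D43 \<Rightarrow> (if a = 3 \<or> a = 4 then 1 else a))"

definition dl :: "ttype \<Rightarrow> nat \<Rightarrow> nat" where
  "dl t a = (case t of A2odd r \<Rightarrow> (if a \<le> r then 0 else 1)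
     | A2even r \<Rightarrow> (if a \<le> r then 0 else 1)
     | D2 r \<Rightarrow> (if a = r + 1 then 1 else 0)
     | E62 \<Rightarrow> (if a \<ge> 5 then 1 else 0)
     | D43 \<Rightarrow> (if a = 3 then 1 else if a = 4 then 2 else 0))"

lemma T1: "valid_type t \<Longrightarrow> a \<in> Isig t \<Longrightarrow> a \<in> nodes t \<and> rho t a = a \<and> dl t a = 0 \<and> a \<noteq> 0"
  by (cases t) (auto simp: valid_type_def Isig_def nodes_def rho_def dl_def)

lemma T2: "valid_type t \<Longrightarrow> a \<in> nodes t \<Longrightarrow> rho t a \<in> Isig t"
  by (cases t) (auto simp: valid_type_def Isig_def nodes_def rho_def dl_def)

lemma T3: "valid_type t \<Longrightarrow> a \<in> nodes t \<Longrightarrow> sigma t a \<in> nodes t"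
  by (cases t) (auto simp: valid_type_def sigma_def nodes_def)

lemma T4: "valid_type t \<Longrightarrow> a \<in> nodes t \<Longrightarrow> rho t (sigma t a) = rho t a \<and>
   (sigma t (rho t a) = rho t a \<or> (int (dl t (sigma t a)) - int (dl t a) - 1) mod int (kappa t) = 0)"
  by (cases t) (auto simp: valid_type_def sigma_def nodes_def rho_def dl_def kappa_def)

lemma T5: "valid_type t \<Longrightarrow> a \<in> nodes t \<Longrightarrow> dl t a > 0 \<Longrightarrow>
   \<exists>c \<in> nodes t. sigma t c = a \<and> rho t c = rho t a \<and> dl t c = dl t a - 1"
proof (cases t)
  case (A2odd r)
  assume "valid_type t" "a \<in> nodes t" "dl t a > 0"
  then show ?thesis using A2odd
    by (intro bexI[of _ "2*r - a"]) (auto simp: valid_type_def sigma_def nodes_def rho_def dl_def split: if_splits)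
next
  case (A2even r)
  assume "valid_type t" "a \<in> nodes t" "dl t a > 0"
  then show ?thesis using A2even
    by (intro bexI[of _ "2*r + 1 - a"]) (auto simp: valid_type_def sigma_def nodes_def rho_def dl_def split: if_splits)
next
  case (D2 r)
  assume "valid_type t" "a \<in> nodes t" "dl t a > 0"
  then show ?thesis using D2
    by (intro bexI[of _ "r"]) (auto simp: valid_type_def sigma_def nodes_def rho_def dl_def split: if_splits)
next
  case E62
  assume "valid_type t" "a \<in> nodes t" "dl t a > 0"
  then have "a = 5 \<or> a = 6" using E62 by (auto simp: nodes_def dl_def split: if_splits)
  then show ?thesis using E62
    by (elim disjE; (intro bexI[of _ "2"] bexI[of _ "1"]))
       (auto simp: valid_type_def sigma_def nodes_def rho_def dl_def)
next
  case D43
  assume "valid_type t" "a \<in> nodes t" "dl t a > 0"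
  then have "a = 3 \<or> a = 4" using D43 by (auto simp: nodes_def dl_def split: if_splits)
  then show ?thesis using D43
    by (elim disjE; (intro bexI[of _ "1"] bexI[of _ "3"]))
       (auto simp: valid_type_def sigma_def nodes_def rho_def dl_def)
qed

lemma kappa_ge: "kappa t \<ge> 2"
  by (cases t) (auto simp: kappa_def)

lemma nodes_finite: "finite (nodes t)"
  by (cases t) (auto simp: nodes_def)

lemma adj_nodes: "adj t a b \<Longrightarrow> b \<in> nodes t"
  by (simp add: adj_def)

lemma adj_finite: "finite {b. adj t a b}"
  using nodes_finite[of t] adj_nodes[of t a] by (metis finite_subset mem_Collect_eq subsetI)


lemma cyl_eq:
  assumes "c \<noteq> 0" "x - y = of_int k * (2 * of_real pi * \<i> / c)"
  shows "cyl c x = cyl c y"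
proof -
  let ?p = "2 * of_real pi * \<i> / c"
  have x: "x = y + of_int k * ?p" using assms(2) by (simp add: algebra_simps)
  show ?thesis
  proof
    show "cyl c x \<subseteq> cyl c y"
    proof
      fix z assume "z \<in> cyl c x"
      then obtain j where "z = x + of_int j * ?p" by (auto simp: cyl_def)
      then have "z = y + of_int (j + k) * ?p" unfolding x by (simp add: algebra_simps add_divide_distrib diff_divide_distrib)
      then show "z \<in> cyl c y" unfolding cyl_def by blast
    qed
    show "cyl c y \<subseteq> cyl c x"
    proof
      fix z assume "z \<in> cyl c y"
      then obtain j where "z = y + of_int j * ?p" by (auto simp: cyl_def)
      then have "z = x + of_int (j - k) * ?p" unfolding x by (simp add: algebra_simps add_divide_distrib diff_divide_distrib)
      then show "z \<in> cyl c x" unfolding cyl_def by blast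
    qed
  qed
qed

lemma cyl_self: "u \<in> cyl c u"
  unfolding cyl_def by (auto intro: exI[of _ 0])

lemma cyl_mem: "v \<in> cyl c u \<Longrightarrow> \<exists>k::int. v - u = of_int k * (2 * of_real pi * \<i> / c)"
  unfolding cyl_def by auto

lemma kappa_a_cases: "kappa_a t b = 1 \<or> (kappa_a t b = kappa t \<and> sigma t b = b)"
  by (auto simp: kappa_a_def)

lemma Omega_kappa: "h \<noteq> 0 \<Longrightarrow> of_nat (kappa t) * Omega t h = 2 * of_real pi * \<i> / h"
  using kappa_ge[of t] by (simp add: Omega_def field_simps)

lemma PT1:
  assumes h: "h \<noteq> 0" and d: "x - y = of_int k * (of_nat (kappa t) * Omega t h)"
  shows "TT t h b m x = TT t h b m y"
proof -
  have kp: "of_nat (kappa t) \<noteq> (0::complex)" using kappa_ge[of t] by simp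
  have "cyl (of_nat (kappa_a t b) * h) x = cyl (of_nat (kappa_a t b) * h) y"
  proof (cases "kappa_a t b = 1")
    case True
    then show ?thesis using d h Omega_kappa[OF h, of t] by (intro cyl_eq[where k=k]) auto
  next
    case False
    then have "kappa_a t b = kappa t" using kappa_a_cases[of t b] by auto
    moreover have "x - y = of_int (k * int (kappa t)) * (2 * of_real pi * \<i> / (of_nat (kappa t) * h))"
      using d h kp by (simp add: Omega_def field_simps)
    ultimately show ?thesis using h kp by (intro cyl_eq[where k="k * int (kappa t)"]) auto
  qed
  then show ?thesis by (simp add: TT_def)
qed

lemma PT2:
  assumes h: "h \<noteq> 0" and s: "sigma t b = b" and d: "x - y = of_int k * Omega t h"
  shows "TT t h b m x = TT t h b m y"
proof -
  have kp: "of_nat (kappa t) \<noteq> (0::complex)" using kappa_ge[of t] by simp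
  have "kappa_a t b = kappa t" using s by (simp add: kappa_a_def)
  moreover have "x - y = of_int k * (2 * of_real pi * \<i> / (of_nat (kappa t) * h))"
    using d h kp by (simp add: Omega_def field_simps)
  ultimately have "cyl (of_nat (kappa_a t b) * h) x = cyl (of_nat (kappa_a t b) * h) y"
    using h kp by (intro cyl_eq[where k=k]) auto
  then show ?thesis by (simp add: TT_def)
qed


lemma TT_0 [simp]: "TT t h 0 m x = 1" by (simp add: TT_def)

lemma prod_two_sup:
  assumes "A \<subseteq> {x, y}" "x \<noteq> y" "\<And>b. b \<in> {x, y} \<Longrightarrow> b \<notin> A \<Longrightarrow> f b = 1"
  shows "prod f A = f x * f y"
proof -
  have "prod f A = prod f {x, y}"
    using assms by (intro prod.mono_neutral_left) auto
  then show ?thesis using assms(2) by simp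
qed

lemma ID_A2odd:
  assumes h: "h \<noteq> 0" and t: "t = A2odd r" "r \<ge> 2" and a: "a \<in> nodes t"
  shows "(\<Prod>b\<in>{b. adj t a b}. TT t h (rho t b) m (u - of_nat (dl t b) * Omega t h))
       = Mt t h (rho t a) m (u - of_nat (dl t a) * Omega t h)"
proof -
  let ?F = "\<lambda>b. TT t h (rho t b) m (u - of_nat (dl t b) * Omega t h)"
  let ?O = "Omega t h"
  have a1: "1 \<le> a" "a \<le> 2*r - 1" using a t by (auto simp: nodes_def)
  have "prod ?F {b. adj t a b} = ?F (a - 1) * ?F (a + 1)"
  proof (rule prod_two_sup)
    show "{b. adj t a b} \<subseteq> {a - 1, a + 1}" using t by (auto simp: adj_def)
    fix b assume "b \<in> {a - 1, a + 1}" "b \<notin> {b. adj t a b}"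
    then have "b = 0 \<or> b = 2 * r" using t a1 by (auto simp: adj_def nodes_def)
    then show "?F b = 1" using t by (auto simp: rho_def)
  qed (use a1 in auto)
  also have "\<dots> = Mt t h (rho t a) m (u - of_nat (dl t a) * ?O)"
  proof -
    consider "a < r" | "a = r" | "a > r" by linarith
    then show ?thesis
    proof cases
      case 1
      then have "a \<le> r - 1" "a - 1 \<le> r" by auto
      then show ?thesis using t a1 1 by (simp add: rho_def dl_def Mt_def Let_def)
    next
      case 2
      have "TT t h (r - 1) m (u - ?O) = TT t h (r - 1) m (u + ?O)"
        by (rule PT1[OF h, where k="-1"]) (simp add: t kappa_def)
      then show ?thesis using t a1 2 by (auto simp: rho_def dl_def Mt_def Let_def)
    next
      case 3
      show ?thesis
      proof (cases "a = r + 1")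
        case True
        have "TT t h r m u = TT t h r m (u - ?O)"
          by (rule PT2[OF h, where k="1"]) (simp_all add: t sigma_def)
        then show ?thesis using t a1 3 True by (auto simp: rho_def dl_def Mt_def Let_def mult.commute numeral_2_eq_2)
      next
        case False
        then show ?thesis using t a1 3 by (auto simp: rho_def dl_def Mt_def Let_def mult.commute Suc_diff_le)
      qed
    qed
  qed
  finally show ?thesis .
qed


lemma ID_A2even:
  assumes h: "h \<noteq> 0" and t: "t = A2even r" "r \<ge> 1" and a: "a \<in> nodes t"
  shows "(\<Prod>b\<in>{b. adj t a b}. TT t h (rho t b) m (u - of_nat (dl t b) * Omega t h))
       = Mt t h (rho t a) m (u - of_nat (dl t a) * Omega t h)"
proof -
  let ?F = "\<lambda>b. TT t h (rho t b) m (u - of_nat (dl t b) * Omega t h)"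
  let ?O = "Omega t h"
  have a1: "1 \<le> a" "a \<le> 2*r" using a t by (auto simp: nodes_def)
  have "prod ?F {b. adj t a b} = ?F (a - 1) * ?F (a + 1)"
  proof (rule prod_two_sup)
    show "{b. adj t a b} \<subseteq> {a - 1, a + 1}" using t by (auto simp: adj_def)
    fix b assume "b \<in> {a - 1, a + 1}" "b \<notin> {b. adj t a b}"
    then have "b = 0 \<or> b = 2 * r + 1" using t a1 by (auto simp: adj_def nodes_def)
    then show "?F b = 1" using t by (auto simp: rho_def)
  qed (use a1 in auto)
  also have "\<dots> = Mt t h (rho t a) m (u - of_nat (dl t a) * ?O)"
  proof -
    consider "a < r" | "a = r" | "a > r" by linarith
    then show ?thesis
    proof cases
      case 1
      then have "a \<le> r - 1" "a - 1 \<le> r" by auto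
      then show ?thesis using t a1 1 by (simp add: rho_def dl_def Mt_def Let_def)
    next
      case 2
      have "TT t h r m (u - ?O) = TT t h r m (u + ?O)"
        by (rule PT1[OF h, where k="-1"]) (simp add: t kappa_def)
      then show ?thesis using t a1 2 by (auto simp: rho_def dl_def Mt_def Let_def)
    next
      case 3
      show ?thesis
      proof (cases "a = r + 1")
        case True
        show ?thesis using t a1 3 True by (auto simp: rho_def dl_def Mt_def Let_def mult.commute numeral_2_eq_2)
      next
        case False
        then show ?thesis using t a1 3 by (auto simp: rho_def dl_def Mt_def Let_def mult.commute Suc_diff_le)
      qed
    qed
  qed
  finally show ?thesis .
qed


lemma ID_D2:
  assumes h: "h \<noteq> 0" and t: "t = D2 r" "r \<ge> 3" and a: "a \<in> nodes t"
  shows "(\<Prod>b\<in>{b. adj t a b}. TT t h (rho t b) m (u - of_nat (dl t b) * Omega t h))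
       = Mt t h (rho t a) m (u - of_nat (dl t a) * Omega t h)"
proof -
  let ?F = "\<lambda>b. TT t h (rho t b) m (u - of_nat (dl t b) * Omega t h)"
  let ?O = "Omega t h"
  have a1: "1 \<le> a" "a \<le> r + 1" using a t by (auto simp: nodes_def)
  consider "a \<le> r - 2" | "a = r - 1" | "a = r" | "a = r + 1" using a1 by linarith
  then show ?thesis
  proof cases
    case 1
    have "prod ?F {b. adj t a b} = ?F (a - 1) * ?F (a + 1)"
    proof (rule prod_two_sup)
      show "{b. adj t a b} \<subseteq> {a - 1, a + 1}" using t 1 by (auto simp: adj_def doubleton_eq_iff)
      fix b assume "b \<in> {a - 1, a + 1}" "b \<notin> {b. adj t a b}"
      then have "b = 0" using t a1 1 by (auto simp: adj_def nodes_def)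
      then show "?F b = 1" using t by (auto simp: rho_def)
    qed (use a1 in auto)
    then show ?thesis using t 1 a1 by (auto simp: rho_def dl_def Mt_def Let_def)
  next
    case 2
    have s: "{b. adj t a b} = {r - 2, r, r + 1}" using t 2 by (auto simp: adj_def nodes_def doubleton_eq_iff)
    have "TT t h r m (u - ?O) = TT t h r m (u + ?O)"
      by (rule PT1[OF h, where k="-1"]) (simp add: t kappa_def)
    moreover have "r - 2 \<noteq> r" "r - 2 \<noteq> Suc r" using t by auto
    ultimately show ?thesis unfolding s using t 2 by (auto simp: rho_def dl_def Mt_def Let_def mult_ac)
  next
    case 3
    have s: "{b. adj t a b} = {r - 1}" using t 3 by (auto simp: adj_def nodes_def doubleton_eq_iff)
    then show ?thesis unfolding s using t 3 by (auto simp: rho_def dl_def Mt_def Let_def)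
  next
    case 4
    have s: "{b. adj t a b} = {r - 1}" using t 4 by (auto simp: adj_def nodes_def doubleton_eq_iff)
    have ne: "r - 1 \<noteq> r" "r - 1 \<noteq> Suc r" using t by arith+
    have "TT t h (r - 1) m u = TT t h (r - 1) m (u - ?O)"
      by (rule PT2[OF h, where k="1"]) (use t ne in \<open>simp_all add: sigma_def\<close>)
    moreover note ne
    ultimately show ?thesis unfolding s using t 4 by (auto simp: rho_def dl_def Mt_def Let_def)
  qed
qed

lemma ID_E62:
  assumes h: "h \<noteq> 0" and t: "t = E62" and a: "a \<in> nodes t"
  shows "(\<Prod>b\<in>{b. adj t a b}. TT t h (rho t b) m (u - of_nat (dl t b) * Omega t h))
       = Mt t h (rho t a) m (u - of_nat (dl t a) * Omega t h)"
proof -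
  let ?O = "Omega t h"
  have "a = 1 \<or> a = 2 \<or> a = 3 \<or> a = 4 \<or> a = 5 \<or> a = 6" using a t by (auto simp: nodes_def)
  moreover have "{b. adj t 1 b} = {2}" "{b. adj t 2 b} = {1,3}" "{b. adj t 3 b} = {2,4,5}"
    "{b. adj t 4 b} = {3}" "{b. adj t 5 b} = {3,6}" "{b. adj t 6 b} = {5}"
    using t by (auto simp: adj_def nodes_def doubleton_eq_iff)
  moreover have "TT t h 2 m (u - ?O) = TT t h 2 m (u + ?O)"
    by (rule PT1[OF h, where k="-1"]) (simp add: t kappa_def)
  moreover have "TT t h 3 m u = TT t h 3 m (u - ?O)"
    by (rule PT2[OF h, where k="1"]) (use t in \<open>simp_all add: sigma_def\<close>)
  ultimately show ?thesis using t by (auto simp: rho_def dl_def Mt_def Let_def mult_ac)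
qed

lemma ID_D43:
  assumes h: "h \<noteq> 0" and t: "t = D43" and a: "a \<in> nodes t"
  shows "(\<Prod>b\<in>{b. adj t a b}. TT t h (rho t b) m (u - of_nat (dl t b) * Omega t h))
       = Mt t h (rho t a) m (u - of_nat (dl t a) * Omega t h)"
proof -
  let ?O = "Omega t h"
  have "a = 1 \<or> a = 2 \<or> a = 3 \<or> a = 4" using a t by (auto simp: nodes_def)
  moreover have "{b. adj t 1 b} = {2}" "{b. adj t 2 b} = {1,3,4}" "{b. adj t 3 b} = {2}"
    "{b. adj t 4 b} = {2}"
    using t by (auto simp: adj_def nodes_def doubleton_eq_iff)
  moreover have "TT t h 1 m (u - 2 * ?O) = TT t h 1 m (u + ?O)"
    by (rule PT1[OF h, where k="-1"]) (simp add: t kappa_def)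
  moreover have "TT t h 2 m u = TT t h 2 m (u - ?O)"
    by (rule PT2[OF h, where k="1"]) (use t in \<open>simp_all add: sigma_def\<close>)
  moreover have "TT t h 2 m u = TT t h 2 m (u - 2 * ?O)"
    by (rule PT2[OF h, where k="2"]) (use t in \<open>simp_all add: sigma_def\<close>)
  ultimately show ?thesis using t by (auto simp: rho_def dl_def Mt_def Let_def mult_ac)
qed

lemma ID:
  assumes h: "h \<noteq> 0" and v: "valid_type t" and a: "a \<in> nodes t"
  shows "(\<Prod>b\<in>{b. adj t a b}. TT t h (rho t b) m (u - of_nat (dl t b) * Omega t h))
       = Mt t h (rho t a) m (u - of_nat (dl t a) * Omega t h)"
  using v a ID_A2odd[OF h] ID_A2even[OF h] ID_D2[OF h] ID_E62[OF h] ID_D43[OF h]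
  by (cases t) (auto simp: valid_type_def)


lemma quot_eq:
  assumes R: "cring R" and I: "ideal I R" and x: "x \<in> carrier R" and y: "y \<in> carrier R"
    and d: "x \<ominus>\<^bsub>R\<^esub> y \<in> I"
  shows "I +>\<^bsub>R\<^esub> x = I +>\<^bsub>R\<^esub> y"
proof -
  interpret R: cring R by fact
  interpret I: ideal I R by fact
  have "x = (x \<ominus>\<^bsub>R\<^esub> y) \<oplus>\<^bsub>R\<^esub> y" using x y by algebra
  then have "I +>\<^bsub>R\<^esub> x = (I +>\<^bsub>R\<^esub> (x \<ominus>\<^bsub>R\<^esub> y)) <+>\<^bsub>R\<^esub> (I +>\<^bsub>R\<^esub> y)"
    using I.a_rcos_sum x y by simp
  also have "I +>\<^bsub>R\<^esub> (x \<ominus>\<^bsub>R\<^esub> y) = I" using R.a_rcos_zero[OF I d] .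
  also have "I <+>\<^bsub>R\<^esub> (I +>\<^bsub>R\<^esub> y) = I +>\<^bsub>R\<^esub> y"
    using I.a_rcos_sum[OF R.zero_closed y] R.a_rcos_zero[OF I I.zero_closed] y by simp
  finally show ?thesis .
qed

lemma hom_prod_cong:
  assumes S: "cring S" and H: "H \<in> ring_hom (laurent V) S" and A: "finite A"
    and fg: "\<And>c. c \<in> A \<Longrightarrow> f c \<in> LC V \<and> g c \<in> LC V \<and> H (f c) = H (g c)"
  shows "H (prod f A) = H (prod g A)"
  using A fg
proof (induction A rule: finite_induct)
  case empty then show ?case by simp
next
  case (insert x F)
  have pf: "prod f F \<in> LC V" "prod g F \<in> LC V" using insert by (auto intro!: LC_prod)
  have "H (prod f (insert x F)) = H (f x * prod f F)" using insert by simp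
  also have "\<dots> = H (f x) \<otimes>\<^bsub>S\<^esub> H (prod f F)" using ring_hom_mult[OF H, of "f x" "prod f F"] insert pf by simp
  also have "\<dots> = H (g x) \<otimes>\<^bsub>S\<^esub> H (prod g F)" using insert by simp
  also have "\<dots> = H (g x * prod g F)" using ring_hom_mult[OF H, of "g x" "prod g F"] insert pf by simp
  finally show ?case using insert by simp
qed

lemma hom_expr_cong:
  assumes S: "cring S" and H: "H \<in> ring_hom (laurent V) S"
    and c: "x1 \<in> LC V" "x2 \<in> LC V" "x3 \<in> LC V" "x4 \<in> LC V" "x5 \<in> LC V"
           "y1 \<in> LC V" "y2 \<in> LC V" "y3 \<in> LC V" "y4 \<in> LC V" "y5 \<in> LC V"
    and e: "H x1 = H y1" "H x2 = H y2" "H x3 = H y3" "H x4 = H y4" "H x5 = H y5"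
  shows "H (x1 * x2 - x3 * x4 - x5) = H (y1 * y2 - y3 * y4 - y5)"
proof -
  interpret S: cring S by fact
  interpret hh: ring_hom_cring "laurent V" S H by (intro ring_hom_cring.intro ring_hom_cring_axioms.intro laurent_cring S H)
  have hadd: "H (a + b) = H a \<oplus>\<^bsub>S\<^esub> H b" if "a \<in> LC V" "b \<in> LC V" for a b
    using ring_hom_add[OF H, of a b] that by simp
  have hmul: "H (a * b) = H a \<otimes>\<^bsub>S\<^esub> H b" if "a \<in> LC V" "b \<in> LC V" for a b
    using ring_hom_mult[OF H, of a b] that by simp
  have hneg: "H (- a) = \<ominus>\<^bsub>S\<^esub> H a" if "a \<in> LC V" for a
    using hh.hom_a_inv[of a] that by simp
  have ex: "H (z1 * z2 - z3 * z4 - z5) = H z1 \<otimes>\<^bsub>S\<^esub> H z2 \<oplus>\<^bsub>S\<^esub> \<ominus>\<^bsub>S\<^esub> (H z3 \<otimes>\<^bsub>S\<^esub> H z4) \<oplus>\<^bsub>S\<^esub> \<ominus>\<^bsub>S\<^esub> H z5"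
    if "z1 \<in> LC V" "z2 \<in> LC V" "z3 \<in> LC V" "z4 \<in> LC V" "z5 \<in> LC V" for z1 z2 z3 z4 z5
  proof -
    have "z1 * z2 - z3 * z4 - z5 = z1 * z2 + - (z3 * z4) + - z5" by simp
    then show ?thesis using that
      by (simp only: hadd hmul hneg LC_mult LC_minus LC_add)
  qed
  show ?thesis using ex[OF c(1-5)] ex[OF c(6-10)] e by simp
qed


definition rep :: "complex set \<Rightarrow> complex" where "rep C = (SOME u. u \<in> C)"

definition gA :: "ttype \<Rightarrow> complex \<Rightarrow> gen \<Rightarrow> gen" where
  "gA t h x = (case x of (a, m, C) \<Rightarrow>
     (rho t a, m, cyl (of_nat (kappa_a t (rho t a)) * h) (rep C - of_nat (dl t a) * Omega t h)))"

definition gB :: "complex \<Rightarrow> gen \<Rightarrow> gen" where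
  "gB h x = (case x of (b, m, C) \<Rightarrow> (b, m, cyl h (rep C)))"

lemma rep_mem: "rep (cyl c u) \<in> cyl c u"
  unfolding rep_def by (rule someI[of _ u]) (rule cyl_self)

lemma cyl_mem_eq: "c \<noteq> 0 \<Longrightarrow> w \<in> cyl c v \<Longrightarrow> cyl c w = cyl c v"
  using cyl_mem[of w c v] cyl_eq[of c w v] by blast

lemma cyl_mem_coarse:
  assumes c: "c \<noteq> 0" and n: "n > 0" and w: "w \<in> cyl c v"
  shows "cyl (of_nat n * c) (w - z) = cyl (of_nat n * c) (v - z)"
proof -
  obtain k where k: "w - v = of_int k * (2 * of_real pi * \<i> / c)" using cyl_mem[OF w] by blast
  have "(w - z) - (v - z) = of_int (k * int n) * (2 * of_real pi * \<i> / (of_nat n * c))"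
    using k c n by (simp add: field_simps)
  then show ?thesis using c n by (intro cyl_eq[where k="k * int n"]) auto
qed

lemma kappa_a_pos: "kappa_a t b > 0"
  using kappa_ge[of t] by (auto simp: kappa_a_def)

context
  fixes t :: ttype and h :: complex
  assumes v: "valid_type t" and h: "h \<noteq> 0"
begin

lemma gA_gens: "x \<in> gensX t h \<Longrightarrow> gA t h x \<in> gensT t h"
  using T2[OF v] by (auto simp: gensX_def gensT_def gA_def)

lemma gB_gens: "x \<in> gensT t h \<Longrightarrow> gB h x \<in> gensX t h"
  using T1[OF v] by (auto simp: gensX_def gensT_def gB_def)

lemma TX_LC: "a \<in> nodes t \<Longrightarrow> TX h a m u \<in> LC (gensX t h)"
  by (auto simp: TX_def LC_one intro!: LC_var simp: gensX_def)

lemma TT_LC: "a \<in> Isig t \<or> a = 0 \<Longrightarrow> TT t h a m u \<in> LC (gensT t h)"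
  by (auto simp: TT_def LC_one intro!: LC_var simp: gensT_def)

lemma Mt_prod: "a \<in> Isig t \<Longrightarrow>
  Mt t h a m u = (\<Prod>b\<in>{b. adj t a b}. TT t h (rho t b) m (u - of_nat (dl t b) * Omega t h))"
  using ID[OF h v, of a m u] T1[OF v, of a] by simp

lemma Mt_LC: "a \<in> Isig t \<Longrightarrow> Mt t h a m u \<in> LC (gensT t h)"
  unfolding Mt_prod by (rule LC_prod') (auto intro!: TT_LC T2[OF v] dest: adj_nodes)

lemma relsX_LC: "relsX t h \<subseteq> LC (gensX t h)"
  unfolding relsX_def
  by (auto intro!: LC_diff LC_mult TX_LC LC_prod' dest: adj_nodes)

lemma relsT_LC: "relsT t h \<subseteq> LC (gensT t h)"
  unfolding relsT_def
  by (auto intro!: LC_diff LC_mult TT_LC Mt_LC)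

lemma pA_TX: "a \<in> nodes t \<Longrightarrow>
  pmap (gA t h) (TX h a m u) = TT t h (rho t a) m (u - of_nat (dl t a) * Omega t h)"
proof -
  assume a: "a \<in> nodes t"
  have r0: "rho t a \<noteq> 0" using T1[OF v T2[OF v a]] by simp
  have "cyl (of_nat (kappa_a t (rho t a)) * h) (rep (cyl h u) - of_nat (dl t a) * Omega t h)
      = cyl (of_nat (kappa_a t (rho t a)) * h) (u - of_nat (dl t a) * Omega t h)"
    by (rule cyl_mem_coarse[OF h kappa_a_pos rep_mem])
  then show ?thesis using r0 by (simp add: TX_def TT_def gA_def)
qed

lemma gAB: "x \<in> gensT t h \<Longrightarrow> gA t h (gB h x) = x"
proof -
  assume "x \<in> gensT t h"
  then obtain b m u where x: "x = (b, m, cyl (of_nat (kappa_a t b) * h) u)" "b \<in> Isig t"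
    by (auto simp: gensT_def)
  have b: "rho t b = b" "dl t b = 0" using T1[OF v x(2)] by auto
  let ?c = "of_nat (kappa_a t b) * h"
  have c: "?c \<noteq> 0" using h kappa_a_pos[of t b] by simp
  let ?w = "rep (cyl ?c u)"
  have "cyl ?c (rep (cyl h ?w) - 0) = cyl ?c (?w - 0)"
    by (rule cyl_mem_coarse[OF h kappa_a_pos rep_mem])
  also have "\<dots> = cyl ?c u" using cyl_mem_eq[OF c rep_mem] by simp
  finally show ?thesis using b x by (simp add: gA_def gB_def)
qed

lemma pAB: "q \<in> LC (gensT t h) \<Longrightarrow> pmap (gA t h) (pmap (gB h) q) = q"
proof -
  assume q: "q \<in> LC (gensT t h)"
  have "pmap (gA t h) (pmap (gB h) q) = pmap (gA t h \<circ> gB h) q" by (rule pmap_comp)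
  also have "\<dots> = pmap id q" by (rule pmap_cong[OF q]) (simp add: gAB)
  finally show ?thesis by (simp add: pmap_id)
qed

lemma pB_TT: "b \<in> Isig t \<Longrightarrow> m \<ge> 1 \<Longrightarrow>
   pmap (gB h) (TT t h b m x) = TX h b m (rep (cyl (of_nat (kappa_a t b) * h) x))"
  using T1[OF v, of b] by (simp add: TT_def TX_def gB_def)

lemma pA_hom: "pmap (gA t h) \<in> ring_hom (laurent (gensX t h)) (laurent (gensT t h))"
  by (rule pmap_hom) (auto intro: gA_gens)

lemma pB_hom: "pmap (gB h) \<in> ring_hom (laurent (gensT t h)) (laurent (gensX t h))"
  by (rule pmap_hom) (auto intro: gB_gens)

end


context
  fixes t :: ttype and h :: complex
  assumes v: "valid_type t" and h: "h \<noteq> 0"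
begin

lemma IX_ideal: "ideal (genideal (laurent (gensX t h)) (relsX t h)) (laurent (gensX t h))"
  using L.genideal_ideal[of "relsX t h" "gensX t h"] relsX_LC[OF v h] by simp

lemma IT_ideal: "ideal (genideal (laurent (gensT t h)) (relsT t h)) (laurent (gensT t h))"
  using L.genideal_ideal[of "relsT t h" "gensT t h"] relsT_LC[OF v h] by simp

lemma ringX_eq: "ringX t h = laurent (gensX t h) Quot genideal (laurent (gensX t h)) (relsX t h)"
  by (simp add: ringX_def presented_def)

lemma ringT_eq: "ringT t h = laurent (gensT t h) Quot genideal (laurent (gensT t h)) (relsT t h)"
  by (simp add: ringT_def presented_def)

lemma clsX_eq: "clsX t h p = genideal (laurent (gensX t h)) (relsX t h) +>\<^bsub>laurent (gensX t h)\<^esub> p"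
  by (simp add: clsX_def cls_def)

lemma clsT_eq: "clsT t h p = genideal (laurent (gensT t h)) (relsT t h) +>\<^bsub>laurent (gensT t h)\<^esub> p"
  by (simp add: clsT_def cls_def)

lemma ringX_cring: "cring (ringX t h)"
  unfolding ringX_eq by (rule ideal.quotient_is_cring[OF IX_ideal laurent_cring])

lemma ringT_cring: "cring (ringT t h)"
  unfolding ringT_eq by (rule ideal.quotient_is_cring[OF IT_ideal laurent_cring])

lemma clsX_hom: "clsX t h \<in> ring_hom (laurent (gensX t h)) (ringX t h)"
proof -
  have "clsX t h = (+>\<^bsub>laurent (gensX t h)\<^esub>) (genideal (laurent (gensX t h)) (relsX t h))"
    by (rule ext) (simp add: clsX_eq)
  then show ?thesis unfolding ringX_eq using ideal.rcos_ring_hom[OF IX_ideal] by simp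
qed

lemma clsT_hom: "clsT t h \<in> ring_hom (laurent (gensT t h)) (ringT t h)"
proof -
  have "clsT t h = (+>\<^bsub>laurent (gensT t h)\<^esub>) (genideal (laurent (gensT t h)) (relsT t h))"
    by (rule ext) (simp add: clsT_eq)
  then show ?thesis unfolding ringT_eq using ideal.rcos_ring_hom[OF IT_ideal] by simp
qed

lemma clsX_carrier: "p \<in> LC (gensX t h) \<Longrightarrow> clsX t h p \<in> carrier (ringX t h)"
  using ring_hom_closed[OF clsX_hom] by simp

definition Jgens :: "gen lpoly set set" where
  "Jgens = {clsX t h (TX h a m u) \<ominus>\<^bsub>ringX t h\<^esub> clsX t h (TX h (sigma t a) m (u + Omega t h))
       | a m u. a \<in> nodes t \<and> m \<ge> 1}"

lemma Jsig_eq: "Jsig t h = genideal (ringX t h) Jgens"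
  by (simp add: Jsig_def Jgens_def)

lemma Jgens_carrier: "Jgens \<subseteq> carrier (ringX t h)"
proof -
  interpret X: cring "ringX t h" by (rule ringX_cring)
  show ?thesis unfolding Jgens_def
    using clsX_carrier TX_LC[OF v h] T3[OF v] by (auto intro!: X.minus_closed)
qed

lemma Jsig_ideal: "ideal (Jsig t h) (ringX t h)"
proof -
  interpret X: cring "ringX t h" by (rule ringX_cring)
  show ?thesis unfolding Jsig_eq by (rule X.genideal_ideal[OF Jgens_carrier])
qed

lemma quotX_cring: "cring (quotX t h)"
  unfolding quotX_def by (rule ideal.quotient_is_cring[OF Jsig_ideal ringX_cring])

lemma clsQ_hom: "clsQ t h \<in> ring_hom (laurent (gensX t h)) (quotX t h)"
proof -
  have "clsQ t h = (+>\<^bsub>ringX t h\<^esub>) (Jsig t h) \<circ> clsX t h"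
    by (rule ext) (simp add: clsQ_def)
  then show ?thesis unfolding quotX_def
    using ring_hom_trans[OF clsX_hom ideal.rcos_ring_hom[OF Jsig_ideal]] by simp
qed

lemma J1: "a \<in> nodes t \<Longrightarrow> m \<ge> 1 \<Longrightarrow>
  clsQ t h (TX h a m u) = clsQ t h (TX h (sigma t a) m (u + Omega t h))"
proof -
  assume a: "a \<in> nodes t" "m \<ge> 1"
  interpret X: cring "ringX t h" by (rule ringX_cring)
  have "clsX t h (TX h a m u) \<ominus>\<^bsub>ringX t h\<^esub> clsX t h (TX h (sigma t a) m (u + Omega t h)) \<in> Jgens"
    using a unfolding Jgens_def by blast
  then have "clsX t h (TX h a m u) \<ominus>\<^bsub>ringX t h\<^esub> clsX t h (TX h (sigma t a) m (u + Omega t h)) \<in> Jsig t h"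
    unfolding Jsig_eq using X.genideal_self[OF Jgens_carrier] by blast
  then show ?thesis unfolding clsQ_def
    by (intro quot_eq[OF ringX_cring Jsig_ideal] clsX_carrier TX_LC[OF v h] a T3[OF v])
qed

lemma J2fix: "b \<in> nodes t \<Longrightarrow> sigma t b = b \<Longrightarrow> m \<ge> 1 \<Longrightarrow>
  clsQ t h (TX h b m (x + of_int k * Omega t h)) = clsQ t h (TX h b m x)"
proof (induction k arbitrary: x rule: int_induct[where k=0])
  case base then show ?case by simp
next
  case (step1 i)
  have "clsQ t h (TX h b m (x + of_int (i + 1) * Omega t h))
      = clsQ t h (TX h b m ((x + of_int i * Omega t h) + Omega t h))" by (simp add: algebra_simps)
  also have "\<dots> = clsQ t h (TX h b m (x + of_int i * Omega t h))"
    using J1[of b m "x + of_int i * Omega t h"] step1 by simp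
  finally show ?case using step1 by simp
next
  case (step2 i)
  have "clsQ t h (TX h b m (x + of_int (i - 1) * Omega t h))
      = clsQ t h (TX h b m ((x + of_int (i - 1) * Omega t h) + Omega t h))"
    using J1[of b m "x + of_int (i - 1) * Omega t h"] step2 by simp
  also have "\<dots> = clsQ t h (TX h b m (x + of_int i * Omega t h))" by (simp add: algebra_simps)
  finally show ?case using step2 by simp
qed

lemma J2: "b \<in> Isig t \<Longrightarrow> m \<ge> 1 \<Longrightarrow>
  cyl (of_nat (kappa_a t b) * h) x = cyl (of_nat (kappa_a t b) * h) y \<Longrightarrow>
  clsQ t h (TX h b m x) = clsQ t h (TX h b m y)"
proof -
  assume b: "b \<in> Isig t" and m: "m \<ge> 1" and c: "cyl (of_nat (kappa_a t b) * h) x = cyl (of_nat (kappa_a t b) * h) y"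
  show ?thesis
  proof (cases "kappa_a t b = 1")
    case True
    then show ?thesis using c by (simp add: TX_def)
  next
    case False
    then have s: "sigma t b = b" "kappa_a t b = kappa t" using kappa_a_cases[of t b] by auto
    have kp: "of_nat (kappa t) \<noteq> (0::complex)" using kappa_ge[of t] by simp
    have "y \<in> cyl (of_nat (kappa_a t b) * h) x" using c cyl_self[of y] by simp
    then obtain k where "y - x = of_int k * (2 * of_real pi * \<i> / (of_nat (kappa t) * h))"
      using cyl_mem s by metis
    then have "y = x + of_int k * Omega t h" by (simp add: Omega_def algebra_simps)
    then show ?thesis using J2fix[of b m x k] b m s T1[OF v b] by simp
  qed
qed

lemma T0: "c \<in> nodes t \<Longrightarrow> dl t c = 0 \<Longrightarrow> rho t c = c"
  using v by (cases t) (auto simp: rho_def dl_def nodes_def valid_type_def split: if_splits)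

lemma ORB: "c \<in> nodes t \<Longrightarrow> m \<ge> 1 \<Longrightarrow>
  clsQ t h (TX h c m u) = clsQ t h (TX h (rho t c) m (u - of_nat (dl t c) * Omega t h))"
proof (induction "dl t c" arbitrary: c u)
  case 0
  then show ?case using T0[of c] by simp
next
  case (Suc n)
  obtain c' where c': "c' \<in> nodes t" "sigma t c' = c" "rho t c' = rho t c" "dl t c' = n"
    using T5[OF v Suc.prems(1)] Suc.hyps(2) by auto
  have "clsQ t h (TX h c m u) = clsQ t h (TX h c' m (u - Omega t h))"
    using J1[OF c'(1) Suc.prems(2), of "u - Omega t h"] c'(2) by simp
  also have "\<dots> = clsQ t h (TX h (rho t c') m (u - Omega t h - of_nat (dl t c') * Omega t h))"
    using Suc.hyps(1)[of c' "u - Omega t h"] c' Suc.prems by simp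
  also have "u - Omega t h - of_nat (dl t c') * Omega t h = u - of_nat (dl t c) * Omega t h"
    using c'(4) Suc.hyps(2)[symmetric] by (simp add: algebra_simps)
  finally show ?case using c'(3) by simp
qed

lemma PB1: "b \<in> Isig t \<Longrightarrow>
  clsQ t h (pmap (gB h) (TT t h b m x)) = clsQ t h (TX h b m x)"
proof (cases "m \<ge> 1")
  case True
  assume b: "b \<in> Isig t"
  have c: "of_nat (kappa_a t b) * h \<noteq> 0" using h kappa_a_pos[of t b] by simp
  show ?thesis unfolding pB_TT[OF v h b True]
    by (rule J2[OF b True]) (rule cyl_mem_eq[OF c rep_mem])
next
  case False
  then show ?thesis by (simp add: TT_def TX_def)
qed

end


lemma ringT_zero: "\<zero>\<^bsub>ringT t h\<^esub> = genideal (laurent (gensT t h)) (relsT t h)"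
  unfolding ringT_def presented_def FactRing_def by simp

lemma ringX_zero: "\<zero>\<^bsub>ringX t h\<^esub> = genideal (laurent (gensX t h)) (relsX t h)"
  unfolding ringX_def presented_def FactRing_def by simp

lemma quotX_zero: "\<zero>\<^bsub>quotX t h\<^esub> = Jsig t h"
  unfolding quotX_def FactRing_def by simp

context
  fixes t :: ttype and h :: complex
  assumes v: "valid_type t" and h: "h \<noteq> 0"
begin

lemma pA_rel: "r \<in> relsX t h \<Longrightarrow> pmap (gA t h) r \<in> relsT t h"
proof -
  assume "r \<in> relsX t h"
  then obtain a m u where r: "r = TX h a m (u - 1) * TX h a m (u + 1) - TX h a (m - 1) u * TX h a (m + 1) u
                 - (\<Prod>b\<in>{b. adj t a b}. TX h b m u)" and a: "a \<in> nodes t" "m \<ge> 1"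
    unfolding relsX_def by blast
  let ?d = "of_nat (dl t a) * Omega t h"
  let ?u = "u - ?d"
  have p: "pmap (gA t h) (\<Prod>b\<in>{b. adj t a b}. TX h b m u)
      = (\<Prod>b\<in>{b. adj t a b}. TT t h (rho t b) m (u - of_nat (dl t b) * Omega t h))"
    unfolding pmap_prod by (rule prod.cong) (auto simp: pA_TX[OF v h] dest: adj_nodes)
  have e1: "u - 1 - ?d = ?u - 1" "u + 1 - ?d = ?u + 1" by (simp_all add: algebra_simps)
  have "pmap (gA t h) r = TT t h (rho t a) m (?u - 1) * TT t h (rho t a) m (?u + 1)
      - TT t h (rho t a) (m - 1) ?u * TT t h (rho t a) (m + 1) ?u - Mt t h (rho t a) m ?u"
    unfolding r pmap_diff pmap_mult p ID[OF h v a(1)] pA_TX[OF v h a(1)] e1 ..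
  then show ?thesis unfolding relsT_def using T2[OF v a(1)] a(2) by blast
qed

lemma H0_hom: "(\<lambda>p. clsT t h (pmap (gA t h) p)) \<in> ring_hom (laurent (gensX t h)) (ringT t h)"
proof -
  have "(\<lambda>p. clsT t h (pmap (gA t h) p)) = clsT t h \<circ> pmap (gA t h)" by (rule ext) simp
  then show ?thesis using ring_hom_trans[OF pA_hom[OF v h] clsT_hom[OF v h]] by simp
qed

lemma H1_hom: "(\<lambda>q. clsQ t h (pmap (gB h) q)) \<in> ring_hom (laurent (gensT t h)) (quotX t h)"
proof -
  have "(\<lambda>q. clsQ t h (pmap (gB h) q)) = clsQ t h \<circ> pmap (gB h)" by (rule ext) simp
  then show ?thesis using ring_hom_trans[OF pB_hom[OF v h] clsQ_hom[OF v h]] by simp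
qed

lemma K1: "i \<in> genideal (laurent (gensX t h)) (relsX t h) \<Longrightarrow>
  clsT t h (pmap (gA t h) i) = \<zero>\<^bsub>ringT t h\<^esub>"
proof -
  assume i: "i \<in> genideal (laurent (gensX t h)) (relsX t h)"
  interpret T: cring "ringT t h" by (rule ringT_cring[OF v h])
  interpret H: ring_hom_ring "laurent (gensX t h)" "ringT t h" "\<lambda>p. clsT t h (pmap (gA t h) p)"
    by (rule ring_hom_ringI2[OF L.ring_axioms T.ring_axioms H0_hom])
  have "relsX t h \<subseteq> a_kernel (laurent (gensX t h)) (ringT t h) (\<lambda>p. clsT t h (pmap (gA t h) p))"
  proof
    fix r assume r: "r \<in> relsX t h"
    have rl: "r \<in> LC (gensX t h)" using r relsX_LC[OF v h] by blast
    have "pmap (gA t h) r \<in> genideal (laurent (gensT t h)) (relsT t h)"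
      using pA_rel[OF r] L.genideal_self[of "relsT t h" "gensT t h"] relsT_LC[OF v h] by auto
    then have "clsT t h (pmap (gA t h) r) = genideal (laurent (gensT t h)) (relsT t h)"
      unfolding clsT_eq[OF v h] by (rule ring.a_rcos_zero[OF L.ring_axioms IT_ideal[OF v h]])
    then show "r \<in> a_kernel (laurent (gensX t h)) (ringT t h) (\<lambda>p. clsT t h (pmap (gA t h) p))"
      using rl unfolding a_kernel_def' ringT_zero by simp
  qed
  then have "genideal (laurent (gensX t h)) (relsX t h) \<subseteq> a_kernel (laurent (gensX t h)) (ringT t h) (\<lambda>p. clsT t h (pmap (gA t h) p))"
    by (rule L.genideal_minimal[OF H.kernel_is_ideal])
  then have "i \<in> a_kernel (laurent (gensX t h)) (ringT t h) (\<lambda>p. clsT t h (pmap (gA t h) p))"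
    using i by (rule subsetD)
  then show ?thesis unfolding a_kernel_def' by (rule CollectE) (rule conjunct2)
qed

lemma clsQ_zero: "r \<in> genideal (laurent (gensX t h)) (relsX t h) \<Longrightarrow> clsQ t h r = \<zero>\<^bsub>quotX t h\<^esub>"
proof -
  assume r: "r \<in> genideal (laurent (gensX t h)) (relsX t h)"
  interpret X: cring "ringX t h" by (rule ringX_cring[OF v h])
  interpret J: ideal "Jsig t h" "ringX t h" by (rule Jsig_ideal[OF v h])
  have "clsX t h r = genideal (laurent (gensX t h)) (relsX t h)"
    unfolding clsX_eq[OF v h] by (rule ring.a_rcos_zero[OF L.ring_axioms IX_ideal[OF v h] r])
  then have "clsX t h r = \<zero>\<^bsub>ringX t h\<^esub>" by (simp only: ringX_zero)
  then have "clsQ t h r = Jsig t h"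
    unfolding clsQ_def using X.a_rcos_zero[OF Jsig_ideal[OF v h] J.zero_closed] by simp
  then show ?thesis by (simp only: quotX_zero)
qed

lemma pB_LC: "b \<in> Isig t \<or> b = 0 \<Longrightarrow> pmap (gB h) (TT t h b m x) \<in> LC (gensX t h)"
  by (rule pmap_LC[OF TT_LC[OF v h]]) (auto intro: gB_gens[OF v h])

lemma K2: "i \<in> genideal (laurent (gensT t h)) (relsT t h) \<Longrightarrow>
  clsQ t h (pmap (gB h) i) = \<zero>\<^bsub>quotX t h\<^esub>"
proof -
  assume i: "i \<in> genideal (laurent (gensT t h)) (relsT t h)"
  interpret Q: cring "quotX t h" by (rule quotX_cring[OF v h])
  interpret H: ring_hom_ring "laurent (gensT t h)" "quotX t h" "\<lambda>q. clsQ t h (pmap (gB h) q)"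
    by (rule ring_hom_ringI2[OF L.ring_axioms Q.ring_axioms H1_hom])
  have "relsT t h \<subseteq> a_kernel (laurent (gensT t h)) (quotX t h) (\<lambda>q. clsQ t h (pmap (gB h) q))"
  proof
    fix r assume r: "r \<in> relsT t h"
    have rl: "r \<in> LC (gensT t h)" using r relsT_LC[OF v h] by blast
    obtain b m u where rr: "r = TT t h b m (u - 1) * TT t h b m (u + 1) - TT t h b (m - 1) u * TT t h b (m + 1) u
                 - Mt t h b m u" and b: "b \<in> Isig t" "m \<ge> 1"
      using r unfolding relsT_def by blast
    have bn: "b \<in> nodes t" using T1[OF v b(1)] by simp
    let ?rX = "TX h b m (u - 1) * TX h b m (u + 1) - TX h b (m - 1) u * TX h b (m + 1) u
                 - (\<Prod>c\<in>{c. adj t b c}. TX h c m u)"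
    have rX0: "?rX \<in> relsX t h" unfolding relsX_def using bn b(2) by blast
    have rX: "?rX \<in> genideal (laurent (gensX t h)) (relsX t h)"
      using L.genideal_self[of "relsX t h" "gensX t h"] relsX_LC[OF v h] rX0 by auto
    have pM: "pmap (gB h) (Mt t h b m u) = (\<Prod>c\<in>{c. adj t b c}. pmap (gB h) (TT t h (rho t c) m (u - of_nat (dl t c) * Omega t h)))"
      unfolding Mt_prod[OF v h b(1)] pmap_prod ..
    have cn: "c \<in> {c. adj t b c} \<Longrightarrow> c \<in> nodes t" for c by (auto dest: adj_nodes)
    let ?P = "\<Prod>c\<in>{c. adj t b c}. pmap (gB h) (TT t h (rho t c) m (u - of_nat (dl t c) * Omega t h))"
    let ?PX = "\<Prod>c\<in>{c. adj t b c}. TX h c m u"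
    have e5: "clsQ t h ?P = clsQ t h ?PX"
    proof (rule hom_prod_cong[OF quotX_cring[OF v h] clsQ_hom[OF v h] adj_finite])
      fix c assume c: "c \<in> {c. adj t b c}"
      show "pmap (gB h) (TT t h (rho t c) m (u - of_nat (dl t c) * Omega t h)) \<in> LC (gensX t h) \<and>
        TX h c m u \<in> LC (gensX t h) \<and>
        clsQ t h (pmap (gB h) (TT t h (rho t c) m (u - of_nat (dl t c) * Omega t h))) = clsQ t h (TX h c m u)"
      proof (intro conjI)
        show "pmap (gB h) (TT t h (rho t c) m (u - of_nat (dl t c) * Omega t h)) \<in> LC (gensX t h)"
          using pB_LC T2[OF v cn[OF c]] by blast
        show "TX h c m u \<in> LC (gensX t h)" using TX_LC[OF v h cn[OF c]] .
        show "clsQ t h (pmap (gB h) (TT t h (rho t c) m (u - of_nat (dl t c) * Omega t h))) = clsQ t h (TX h c m u)"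
          using PB1[OF v h T2[OF v cn[OF c]]] ORB[OF v h cn[OF c] b(2)] by (rule trans[OF _ sym])
      qed
    qed
    have bI: "b \<in> Isig t \<or> b = 0" using b by simp
    have c5: "?P \<in> LC (gensX t h)"
      by (rule LC_prod') (rule pB_LC, use T2[OF v] cn in blast)
    have d5: "?PX \<in> LC (gensX t h)"
      by (rule LC_prod') (rule TX_LC[OF v h], use cn in blast)
    have "clsQ t h (pmap (gB h) r) = clsQ t h ?rX"
      unfolding rr pmap_diff pmap_mult pM
      by (rule hom_expr_cong[OF quotX_cring[OF v h] clsQ_hom[OF v h]
            pB_LC[OF bI] pB_LC[OF bI] pB_LC[OF bI] pB_LC[OF bI] c5
            TX_LC[OF v h bn] TX_LC[OF v h bn] TX_LC[OF v h bn] TX_LC[OF v h bn] d5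
            PB1[OF v h b(1)] PB1[OF v h b(1)] PB1[OF v h b(1)] PB1[OF v h b(1)] e5])
    also have "\<dots> = \<zero>\<^bsub>quotX t h\<^esub>" by (rule clsQ_zero[OF rX])
    finally show "r \<in> a_kernel (laurent (gensT t h)) (quotX t h) (\<lambda>q. clsQ t h (pmap (gB h) q))"
      using rl unfolding a_kernel_def' by simp
  qed
  then have "genideal (laurent (gensT t h)) (relsT t h) \<subseteq> a_kernel (laurent (gensT t h)) (quotX t h) (\<lambda>q. clsQ t h (pmap (gB h) q))"
    by (rule L.genideal_minimal[OF H.kernel_is_ideal])
  then have "i \<in> a_kernel (laurent (gensT t h)) (quotX t h) (\<lambda>q. clsQ t h (pmap (gB h) q))"
    using i by (rule subsetD)
  then show ?thesis unfolding a_kernel_def' by (rule CollectE) (rule conjunct2)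
qed

end


definition Phi :: "ttype \<Rightarrow> complex \<Rightarrow> gen lpoly set \<Rightarrow> gen lpoly set" where
  "Phi t h Y = the_elem ((\<lambda>p. clsT t h (pmap (gA t h) p)) ` Y)"

definition Psi :: "ttype \<Rightarrow> complex \<Rightarrow> gen lpoly set \<Rightarrow> gen lpoly set set" where
  "Psi t h Y = the_elem ((\<lambda>q. clsQ t h (pmap (gB h) q)) ` Y)"

context
  fixes t :: ttype and h :: complex
  assumes v: "valid_type t" and h: "h \<noteq> 0"
begin

lemma Phi_hom: "Phi t h \<in> ring_hom (ringX t h) (ringT t h)"
proof -
  have "Phi t h = (\<lambda>Y. the_elem ((\<lambda>p. clsT t h (pmap (gA t h) p)) ` Y))" by (rule ext) (simp add: Phi_def)
  then show ?thesis unfolding ringX_eq[OF v h]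
    using quot_hom[OF laurent_cring ringT_cring[OF v h] IX_ideal[OF v h] H0_hom[OF v h] K1[OF v h]] by simp
qed

lemma Phi_val: assumes p: "p \<in> LC (gensX t h)" shows "Phi t h (clsX t h p) = clsT t h (pmap (gA t h) p)"
  unfolding Phi_def clsX_eq[OF v h]
  by (rule quot_hom_val[OF laurent_cring ringT_cring[OF v h] IX_ideal[OF v h] H0_hom[OF v h] K1[OF v h]]) (use p laurent_carrier in auto)

lemma Psi_hom: "Psi t h \<in> ring_hom (ringT t h) (quotX t h)"
proof -
  have "Psi t h = (\<lambda>Y. the_elem ((\<lambda>q. clsQ t h (pmap (gB h) q)) ` Y))" by (rule ext) (simp add: Psi_def)
  then show ?thesis unfolding ringT_eq[OF v h]
    using quot_hom[OF laurent_cring quotX_cring[OF v h] IT_ideal[OF v h] H1_hom[OF v h] K2[OF v h]] by simp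
qed

lemma Psi_val: assumes q: "q \<in> LC (gensT t h)" shows "Psi t h (clsT t h q) = clsQ t h (pmap (gB h) q)"
  unfolding Psi_def clsT_eq[OF v h]
  by (rule quot_hom_val[OF laurent_cring quotX_cring[OF v h] IT_ideal[OF v h] H1_hom[OF v h] K2[OF v h]]) (use q laurent_carrier in auto)

lemma ringX_carrier_obtain:
  assumes "Y \<in> carrier (ringX t h)" obtains p where "p \<in> LC (gensX t h)" "Y = clsX t h p"
proof -
  obtain p where "p \<in> carrier (laurent (gensX t h))" "Y = genideal (laurent (gensX t h)) (relsX t h) +>\<^bsub>laurent (gensX t h)\<^esub> p"
    using assms unfolding ringX_eq[OF v h] by (rule quot_carrier_obtain)
  then show ?thesis using that clsX_eq[OF v h] by simp
qed

lemma ringT_carrier_obtain: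
  assumes "Y \<in> carrier (ringT t h)" obtains q where "q \<in> LC (gensT t h)" "Y = clsT t h q"
proof -
  obtain q where "q \<in> carrier (laurent (gensT t h))" "Y = genideal (laurent (gensT t h)) (relsT t h) +>\<^bsub>laurent (gensT t h)\<^esub> q"
    using assms unfolding ringT_eq[OF v h] by (rule quot_carrier_obtain)
  then show ?thesis using that clsT_eq[OF v h] by simp
qed

lemma Phi_surj: "Phi t h ` carrier (ringX t h) = carrier (ringT t h)"
proof
  show "Phi t h ` carrier (ringX t h) \<subseteq> carrier (ringT t h)"
    using ring_hom_closed[OF Phi_hom] by blast
  show "carrier (ringT t h) \<subseteq> Phi t h ` carrier (ringX t h)"
  proof
    fix Y assume "Y \<in> carrier (ringT t h)"
    then obtain q where q: "q \<in> LC (gensT t h)" "Y = clsT t h q" by (rule ringT_carrier_obtain)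
    have pq: "pmap (gB h) q \<in> LC (gensX t h)" by (rule pmap_LC[OF q(1)]) (auto intro: gB_gens[OF v h])
    have "Y = Phi t h (clsX t h (pmap (gB h) q))" using Phi_val[OF pq] pAB[OF v h q(1)] q(2) by simp
    then show "Y \<in> Phi t h ` carrier (ringX t h)" using clsX_carrier[OF v h pq] by blast
  qed
qed

lemma back_eq: "p \<in> LC (gensX t h) \<Longrightarrow> clsQ t h (pmap (gB h) (pmap (gA t h) p)) = clsQ t h p"
proof -
  assume p: "p \<in> LC (gensX t h)"
  have H: "(\<lambda>p. clsQ t h (pmap (gB h) (pmap (gA t h) p))) \<in> ring_hom (laurent (gensX t h)) (quotX t h)"
  proof -
    have "(\<lambda>p. clsQ t h (pmap (gB h) (pmap (gA t h) p))) = (\<lambda>q. clsQ t h (pmap (gB h) q)) \<circ> pmap (gA t h)"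
      by (rule ext) simp
    then show ?thesis using ring_hom_trans[OF pA_hom[OF v h] H1_hom[OF v h]] by simp
  qed
  show ?thesis
  proof (rule hom_ext[OF quotX_cring[OF v h] H clsQ_hom[OF v h] _ p])
    fix x assume "x \<in> gensX t h"
    then obtain a m u where x: "x = (a, m, cyl h u)" "a \<in> nodes t" "m \<ge> 1" by (auto simp: gensX_def)
    have vx: "var x = TX h a m u" using x by (simp add: TX_def)
    have ra: "rho t a \<in> Isig t" by (rule T2[OF v x(2)])
    show "clsQ t h (pmap (gB h) (pmap (gA t h) (var x))) = clsQ t h (var x)"
      unfolding vx pA_TX[OF v h x(2)]
      using PB1[OF v h ra] ORB[OF v h x(2) x(3)] by (rule trans[OF _ sym])
  qed
qed

lemma kernel_eq: "a_kernel (ringX t h) (ringT t h) (Phi t h) = Jsig t h"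
proof -
  interpret X: cring "ringX t h" by (rule ringX_cring[OF v h])
  interpret T: cring "ringT t h" by (rule ringT_cring[OF v h])
  interpret Q: cring "quotX t h" by (rule quotX_cring[OF v h])
  interpret P: ring_hom_cring "ringX t h" "ringT t h" "Phi t h"
    by (intro ring_hom_cring.intro ring_hom_cring_axioms.intro ringX_cring[OF v h] ringT_cring[OF v h] Phi_hom)
  interpret S: ring_hom_cring "ringT t h" "quotX t h" "Psi t h"
    by (intro ring_hom_cring.intro ring_hom_cring_axioms.intro ringT_cring[OF v h] quotX_cring[OF v h] Psi_hom)
  show ?thesis
  proof
    show "a_kernel (ringX t h) (ringT t h) (Phi t h) \<subseteq> Jsig t h"
    proof
      fix Y assume "Y \<in> a_kernel (ringX t h) (ringT t h) (Phi t h)"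
      then have Y: "Y \<in> carrier (ringX t h)" "Phi t h Y = \<zero>\<^bsub>ringT t h\<^esub>" unfolding a_kernel_def' by auto
      obtain p where p: "p \<in> LC (gensX t h)" "Y = clsX t h p" using Y(1) by (rule ringX_carrier_obtain)
      have pa: "pmap (gA t h) p \<in> LC (gensT t h)" by (rule pmap_LC[OF p(1)]) (auto intro: gA_gens[OF v h])
      have "Psi t h (Phi t h Y) = \<zero>\<^bsub>quotX t h\<^esub>" using Y(2) by simp
      moreover have "Psi t h (Phi t h Y) = clsQ t h p"
        using p(2) Phi_val[OF p(1)] Psi_val[OF pa] back_eq[OF p(1)] by simp
      ultimately have "Jsig t h +>\<^bsub>ringX t h\<^esub> Y = Jsig t h"
        using p(2) quotX_zero by (simp add: clsQ_def)
      then show "Y \<in> Jsig t h"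
        by (rule coset_eq_ideal_mem[OF X.ring_axioms Jsig_ideal[OF v h] Y(1)])
    qed
    show "Jsig t h \<subseteq> a_kernel (ringX t h) (ringT t h) (Phi t h)"
      unfolding Jsig_eq[OF v h]
    proof (rule X.genideal_minimal[OF ring_hom_ring.kernel_is_ideal[OF ring_hom_ringI2[OF X.ring_axioms T.ring_axioms Phi_hom]]])
      show "Jgens t h \<subseteq> a_kernel (ringX t h) (ringT t h) (Phi t h)"
      proof
        fix g assume gJ: "g \<in> Jgens t h"
        obtain a m u where g: "g = clsX t h (TX h a m u) \<ominus>\<^bsub>ringX t h\<^esub> clsX t h (TX h (sigma t a) m (u + Omega t h))"
          and a: "a \<in> nodes t" "m \<ge> 1" using gJ by (auto simp: Jgens_def[OF v h])
        have sa: "sigma t a \<in> nodes t" by (rule T3[OF v a(1)])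
        have c1: "clsX t h (TX h a m u) \<in> carrier (ringX t h)" by (rule clsX_carrier[OF v h TX_LC[OF v h a(1)]])
        have c2: "clsX t h (TX h (sigma t a) m (u + Omega t h)) \<in> carrier (ringX t h)"
          by (rule clsX_carrier[OF v h TX_LC[OF v h sa]])
        have eqA: "pmap (gA t h) (TX h a m u) = pmap (gA t h) (TX h (sigma t a) m (u + Omega t h))"
        proof -
          have t4: "rho t (sigma t a) = rho t a"
            "sigma t (rho t a) = rho t a \<or> (int (dl t (sigma t a)) - int (dl t a) - 1) mod int (kappa t) = 0"
            using T4[OF v a(1)] by auto
          let ?k = "int (dl t (sigma t a)) - int (dl t a) - 1"
          have d: "(u - of_nat (dl t a) * Omega t h) - (u + Omega t h - of_nat (dl t (sigma t a)) * Omega t h)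
               = of_int ?k * Omega t h" by (simp add: algebra_simps)
          have "TT t h (rho t a) m (u - of_nat (dl t a) * Omega t h)
              = TT t h (rho t a) m (u + Omega t h - of_nat (dl t (sigma t a)) * Omega t h)"
            using t4(2)
          proof
            assume "sigma t (rho t a) = rho t a"
            then show ?thesis by (rule PT2[OF h _ d])
          next
            assume "?k mod int (kappa t) = 0"
            then obtain j where j: "?k = j * int (kappa t)" by (metis mult.commute mod_0_imp_dvd dvdE)
            have "(u - of_nat (dl t a) * Omega t h) - (u + Omega t h - of_nat (dl t (sigma t a)) * Omega t h)
               = of_int j * (of_nat (kappa t) * Omega t h)" unfolding d j by simp
            then show ?thesis by (rule PT1[OF h])
          qed
          then show ?thesis using pA_TX[OF v h a(1)] pA_TX[OF v h sa] t4(1) by simp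
        qed
        have "Phi t h g = Phi t h (clsX t h (TX h a m u)) \<ominus>\<^bsub>ringT t h\<^esub> Phi t h (clsX t h (TX h (sigma t a) m (u + Omega t h)))"
          unfolding g a_minus_def using c1 c2 by simp
        also have "\<dots> = \<zero>\<^bsub>ringT t h\<^esub>"
          unfolding Phi_val[OF TX_LC[OF v h a(1)]] Phi_val[OF TX_LC[OF v h sa]] eqA
          using T.r_neg ring_hom_closed[OF clsT_hom[OF v h]] pmap_LC[OF TX_LC[OF v h sa], of "gA t h" "gensT t h"] gA_gens[OF v h]
          by (simp add: a_minus_def image_subset_iff)
        finally show "g \<in> a_kernel (ringX t h) (ringT t h) (Phi t h)"
          unfolding a_kernel_def' using g c1 c2 by auto
      qed
    qed
  qed
qed

lemma main_iso:
  "\<exists>\<phi>. \<phi> \<in> ring_iso (quotX t h) (ringT t h) \<and>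
     (\<forall>a \<in> Isig t. \<forall>m::nat. \<forall>u::complex. m \<ge> 1 \<longrightarrow>
        \<phi> (clsQ t h (TX h a m u)) = clsT t h (TT t h a m u))"
proof -
  interpret X: cring "ringX t h" by (rule ringX_cring[OF v h])
  interpret T: cring "ringT t h" by (rule ringT_cring[OF v h])
  interpret PR: ring_hom_ring "ringX t h" "ringT t h" "Phi t h"
    by (rule ring_hom_ringI2[OF X.ring_axioms T.ring_axioms Phi_hom])
  let ?phi = "\<lambda>X. the_elem (Phi t h ` X)"
  have iso: "?phi \<in> ring_iso (quotX t h) (ringT t h)"
    using PR.FactRing_iso_set[OF Phi_surj] kernel_eq by (simp add: quotX_def)
  have val: "?phi (clsQ t h (TX h a m u)) = clsT t h (TT t h a m u)" if a: "a \<in> Isig t" for a m u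
  proof -
    have an: "a \<in> nodes t" "rho t a = a" "dl t a = 0" using T1[OF v a] by auto
    have "?phi (clsQ t h (TX h a m u)) = Phi t h (clsX t h (TX h a m u))"
      unfolding clsQ_def kernel_eq[symmetric]
      by (rule PR.the_elem_simp[OF clsX_carrier[OF v h TX_LC[OF v h an(1)]]])
    also have "\<dots> = clsT t h (TT t h a m u)"
      using Phi_val[OF TX_LC[OF v h an(1)]] pA_TX[OF v h an(1)] an by simp
    finally show ?thesis .
  qed
  show ?thesis using iso val by blast
qed

end

theorem proposition9p5:
  fixes t :: ttype and h :: complex
  assumes "valid_type t"
    and "\<forall>q::rat. h \<noteq> 2 * of_real pi * \<i> * of_real (of_rat q)"
  shows "\<exists>\<phi>. \<phi> \<in> ring_iso (quotX t h) (ringT t h) \<and>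
           (\<forall>a \<in> Isig t. \<forall>m::nat. \<forall>u::complex. m \<ge> 1 \<longrightarrow>
              \<phi> (clsQ t h (TX h a m u)) = clsT t h (TT t h a m u))"
proof -
  have "h \<noteq> 0" using assms(2)[rule_format, of 0] by simp
  then show ?thesis by (rule main_iso[OF assms(1)])
qed


end
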